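(* Let $d\ge2$ be fixed, $c_0$ a constant sufficiently large in terms of $d$ (e.g. $c_0=100d$), $R^2=2\log n+\log((\log n)^{c_0})$, and $\Psi'$ the standard normal distribution on $\mathbb{R}^d$ conditioned on the ball $B(R)$ of radius $R$ about the origin. For a positive integer $k$ let $K'_k$ denote the convex hull of $k$ independent $\Psi'$-distributed points (with $R=R(n)$ fixed by $n$). Let $A\ge10$ be a constant. Then there is a function $\delta(n)\to0$ such that for all sufficiently large $n$ and every integer $n'$ with $n\le n'\le n+A\sqrt{n\log n}$, $$|\mathbb{E}\,\mathrm{Vol}(K'_{n'})-\mathbb{E}\,\mathrm{Vol}(K'_n)|\le n^{-1/2+\delta(n)},\qquad |\mathrm{Var}\,\mathrm{Vol}(K'_{n'})-\mathrm{Var}\,\mathrm{Vol}(K'_n)|\le n^{-1/2+\delta(n)},$$ and for all real $t$, $|\mathbb{P}(\mathrm{Vol}(K'_{n'})\le t)-\mathbb{P}(\mathrm{Vol}(K'_n)\le t)|\le n^{-1/2+\delta(n)}$.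
   Context: The paper writes $n^{-1/2+o(1)}$ for $n^{-1/2+\delta(n)}$ with $\delta(n)\to0$. *)

theory Defs
  imports "HOL-Probability.Probability"
begin

definition std_gauss_dens :: "'a::euclidean_space \<Rightarrow> real" where
  "std_gauss_dens x = (2 * pi) powr (- real DIM('a) / 2) * exp (- (norm x)\<^sup>2 / 2)"

definition std_gauss :: "'a::euclidean_space measure" where
  "std_gauss = density lborel (\<lambda>x. ennreal (std_gauss_dens x))"

definition radius :: "real \<Rightarrow> nat \<Rightarrow> real" where
  "radius c0 n = sqrt (2 * ln (real n) + ln ((ln (real n)) powr c0))"

definition Psi' :: "real \<Rightarrow> nat \<Rightarrow> 'a::euclidean_space measure" where
  "Psi' c0 n = uniform_measure std_gauss (cball 0 (radius c0 n))"

definition sample :: "real \<Rightarrow> nat \<Rightarrow> nat \<Rightarrow> (nat \<Rightarrow> 'a::euclidean_space) measure" where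
  "sample c0 n k = PiM {..<k} (\<lambda>_. Psi' c0 n)"

definition hull_vol :: "nat \<Rightarrow> (nat \<Rightarrow> 'a::euclidean_space) \<Rightarrow> real" where
  "hull_vol k \<omega> = measure lborel (convex hull (\<omega> ` {..<k}))"

definition vol_mean :: "'a::euclidean_space itself \<Rightarrow> real \<Rightarrow> nat \<Rightarrow> nat \<Rightarrow> real" where
  "vol_mean _ c0 n k = integral\<^sup>L (sample c0 n k :: (nat \<Rightarrow> 'a) measure) (hull_vol k)"

definition vol_var :: "'a::euclidean_space itself \<Rightarrow> real \<Rightarrow> nat \<Rightarrow> nat \<Rightarrow> real" where
  "vol_var T c0 n k = integral\<^sup>L (sample c0 n k :: (nat \<Rightarrow> 'a) measure)
      (\<lambda>\<omega>. (hull_vol k \<omega> - vol_mean T c0 n k)\<^sup>2)"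

definition vol_cdf :: "'a::euclidean_space itself \<Rightarrow> real \<Rightarrow> nat \<Rightarrow> nat \<Rightarrow> real \<Rightarrow> real" where
  "vol_cdf _ c0 n k t = measure (sample c0 n k :: (nat \<Rightarrow> 'a) measure)
      {\<omega> \<in> space (sample c0 n k :: (nat \<Rightarrow> 'a) measure). hull_vol k \<omega> \<le> t}"

end

theory Submission
  imports Defs "HOL-Real_Asymp.Real_Asymp"
begin


lemma hull_char:
  fixes \<omega> :: "nat \<Rightarrow> 'a::euclidean_space"
  assumes k: "k > 0" and D: "\<And>X. open X \<Longrightarrow> X \<noteq> {} \<Longrightarrow> \<exists>d\<in>D. d \<in> X"
  shows "x \<in> convex hull (\<omega> ` {..<k}) \<longleftrightarrow> (\<forall>u\<in>D. \<exists>i<k. inner x u \<le> inner (\<omega> i) u)"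
proof
  assume x: "x \<in> convex hull (\<omega> ` {..<k})"
  show "\<forall>u\<in>D. \<exists>i<k. inner x u \<le> inner (\<omega> i) u"
  proof
    fix u assume "u \<in> D"
    define m where "m = Max ((\<lambda>i. inner (\<omega> i) u) ` {..<k})"
    have fin: "finite ((\<lambda>i. inner (\<omega> i) u) ` {..<k})" "(\<lambda>i. inner (\<omega> i) u) ` {..<k} \<noteq> {}"
      using k by auto
    have "convex hull (\<omega> ` {..<k}) \<subseteq> {y. inner y u \<le> m}"
    proof (rule hull_minimal)
      show "\<omega> ` {..<k} \<subseteq> {y. inner y u \<le> m}"
        using fin by (auto simp: m_def intro!: Max_ge)
      show "convex {y. inner y u \<le> m}"
        using convex_halfspace_le[of u m] by (simp add: inner_commute)
    qed
    with x have "inner x u \<le> m" by auto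
    moreover have "m \<in> (\<lambda>i. inner (\<omega> i) u) ` {..<k}" unfolding m_def using fin by (rule Max_in)
    ultimately show "\<exists>i<k. inner x u \<le> inner (\<omega> i) u" by auto
  qed
next
  assume H: "\<forall>u\<in>D. \<exists>i<k. inner x u \<le> inner (\<omega> i) u"
  show "x \<in> convex hull (\<omega> ` {..<k})"
  proof (rule ccontr)
    assume nx: "x \<notin> convex hull (\<omega> ` {..<k})"
    have "closed (convex hull (\<omega> ` {..<k}))"
      by (simp add: compact_imp_closed finite_imp_compact_convex_hull)
    then obtain a b where ab: "inner a x < b" "\<forall>y\<in>convex hull (\<omega> ` {..<k}). inner a y > b"
      using separating_hyperplane_closed_point[OF convex_convex_hull _ nx] by blast
    define X where "X = (\<Inter>i\<in>{..<k}. {u. inner (\<omega> i - x) u < 0})"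
    have "open X" unfolding X_def
      by (intro open_INT) (auto intro: open_halfspace_lt)
    moreover have "-a \<in> X"
    proof -
      { fix i assume "i < k"
        then have "\<omega> i \<in> convex hull (\<omega> ` {..<k})" by (intro hull_inc) auto
        with ab have "inner a (\<omega> i) > inner a x" by auto
        then have "inner (\<omega> i - x) (-a) < 0" by (simp add: inner_diff_left inner_diff_right inner_commute) }
      then show ?thesis unfolding X_def by auto
    qed
    ultimately obtain d where "d \<in> D" "d \<in> X" using D by blast
    with H obtain i where "i < k" "inner x d \<le> inner (\<omega> i) d" by auto
    with \<open>d \<in> X\<close> show False unfolding X_def by (auto simp: inner_diff_left) (meson lessThan_iff not_less)
  qed
qed

lemma hull_vol_measurable_borel:
  "hull_vol k \<in> borel_measurable (PiM {..<k} (\<lambda>_. borel :: 'a::euclidean_space measure))"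
proof (cases "k = 0")
  case True
  then have e: "hull_vol k = (\<lambda>_. 0)" by (auto simp: hull_vol_def fun_eq_iff)
  show ?thesis by (subst e) (rule borel_measurable_const)
next
  case False
  obtain D :: "'a set" where cD: "countable D" and D: "\<And>X. open X \<Longrightarrow> X \<noteq> {} \<Longrightarrow> \<exists>d\<in>D. d \<in> X"
    by (rule countable_dense_setE) blast
  let ?N = "PiM {..<k} (\<lambda>_. borel :: 'a measure)"
  have "D \<noteq> {}" using D[of UNIV] by auto
  define e where "e = from_nat_into D"
  have De: "D = range e" unfolding e_def using \<open>D \<noteq> {}\<close> cD by (simp add: range_from_nat_into)
  define Q where "Q = {p \<in> space (?N \<Otimes>\<^sub>M lborel). \<forall>j::nat. \<exists>i\<in>{..<k}. inner (snd p) (e j) \<le> inner (fst p i) (e j)}"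
  have m1[measurable]: "(\<lambda>p. inner (fst p i) u) \<in> borel_measurable (?N \<Otimes>\<^sub>M lborel)"
    if "i \<in> {..<k}" for i u
  proof -
    have "(\<lambda>p. fst p i) \<in> measurable (?N \<Otimes>\<^sub>M lborel) borel"
      by (rule measurable_compose[OF measurable_fst measurable_component_singleton]) (use that in simp)
    then show ?thesis by measurable
  qed
  have Q: "Q \<in> sets (?N \<Otimes>\<^sub>M lborel)"
    unfolding Q_def by measurable
  have eq: "Pair \<omega> -` Q = convex hull (\<omega> ` {..<k})" if "\<omega> \<in> space ?N" for \<omega>
    using that hull_char[OF _ D, where k=k and \<omega>=\<omega>] False by (auto simp: Q_def space_pair_measure De) (meson lessThan_iff)
  have "(\<lambda>\<omega>. emeasure lborel (Pair \<omega> -` Q)) \<in> borel_measurable ?N"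
    by (rule sigma_finite_measure.measurable_emeasure_Pair[OF _ Q]) (rule sigma_finite_lborel)
  then have "(\<lambda>\<omega>. enn2real (emeasure lborel (Pair \<omega> -` Q))) \<in> borel_measurable ?N"
    by measurable
  then show ?thesis
    by (rule measurable_cong[THEN iffD1, rotated]) (simp add: eq hull_vol_def measure_def)
qed


lemma std_gauss_dens_borel[measurable]: "std_gauss_dens \<in> borel_measurable (borel :: 'a::euclidean_space measure)"
  unfolding std_gauss_dens_def by measurable

lemma sets_std_gauss[simp, measurable_cong]: "sets (std_gauss :: 'a::euclidean_space measure) = sets borel"
  by (simp add: std_gauss_def)

lemma std_gauss_dens_nonneg: "std_gauss_dens x \<ge> 0"
  by (simp add: std_gauss_dens_def)

lemma emeasure_std_gauss: "S \<in> sets borel \<Longrightarrow>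
  emeasure (std_gauss :: 'a::euclidean_space measure) S = (\<integral>\<^sup>+x\<in>S. ennreal (std_gauss_dens x) \<partial>lborel)"
  unfolding std_gauss_def by (subst emeasure_density) auto

lemma gauss_emeasure_le:
  fixes S :: "'a::euclidean_space set"
  assumes S: "S \<in> sets borel" and hi: "\<And>x. x \<in> S \<Longrightarrow> std_gauss_dens x \<le> hi"
  shows "emeasure (std_gauss :: 'a measure) S \<le> ennreal hi * emeasure lborel S"
proof -
  have "emeasure (std_gauss :: 'a measure) S = (\<integral>\<^sup>+x\<in>S. ennreal (std_gauss_dens x) \<partial>lborel)"
    using S by (rule emeasure_std_gauss)
  also have "\<dots> \<le> (\<integral>\<^sup>+x\<in>S. ennreal hi \<partial>lborel)"
    by (intro nn_integral_mono) (auto simp: indicator_def hi ennreal_leI)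
  also have "\<dots> = ennreal hi * emeasure lborel S"
    using S by (simp add: nn_integral_cmult_indicator)
  finally show ?thesis .
qed

lemma gauss_emeasure_ge:
  fixes S :: "'a::euclidean_space set"
  assumes S: "S \<in> sets borel" and lo: "\<And>x. x \<in> S \<Longrightarrow> lo \<le> std_gauss_dens x"
  shows "ennreal lo * emeasure lborel S \<le> emeasure (std_gauss :: 'a measure) S"
proof -
  have "ennreal lo * emeasure lborel S = (\<integral>\<^sup>+x\<in>S. ennreal lo \<partial>lborel)"
    using S by (simp add: nn_integral_cmult_indicator)
  also have "\<dots> \<le> (\<integral>\<^sup>+x\<in>S. ennreal (std_gauss_dens x) \<partial>lborel)"
    by (intro nn_integral_mono) (auto simp: indicator_def lo ennreal_leI)
  also have "\<dots> = emeasure (std_gauss :: 'a measure) S"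
    using S by (rule emeasure_std_gauss[symmetric])
  finally show ?thesis .
qed

lemma lborel_cball_fin: "emeasure lborel (cball (c::'a::euclidean_space) r) < top"
  by (cases "r \<ge> 0") (auto simp: emeasure_cball)

lemma gauss_measure_le:
  fixes S :: "'a::euclidean_space set"
  assumes S: "S \<in> sets borel" "S \<subseteq> cball 0 \<rho>" and hi: "\<And>x. x \<in> S \<Longrightarrow> std_gauss_dens x \<le> hi"
  shows "measure (std_gauss :: 'a measure) S \<le> hi * measure lborel S"
    "emeasure (std_gauss :: 'a measure) S < top"
proof -
  have hi0: "hi \<ge> 0" if "S \<noteq> {}" using that hi std_gauss_dens_nonneg order_trans by blast
  have fl: "emeasure lborel S < top"
    by (rule le_less_trans[OF emeasure_mono[OF S(2)] lborel_cball_fin]) simp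
  have le: "emeasure (std_gauss :: 'a measure) S \<le> ennreal hi * emeasure lborel S"
    by (rule gauss_emeasure_le[OF S(1) hi])
  also have "\<dots> < top" using fl by (simp add: ennreal_mult_less_top)
  finally show fin: "emeasure (std_gauss :: 'a measure) S < top" .
  show "measure (std_gauss :: 'a measure) S \<le> hi * measure lborel S"
  proof (cases "S = {}")
    case True then show ?thesis by simp
  next
    case False
    have "emeasure (std_gauss :: 'a measure) S \<le> ennreal (hi * measure lborel S)"
      using le fl hi0[OF False] by (simp add: emeasure_eq_ennreal_measure ennreal_mult)
    then show ?thesis using fin hi0[OF False]
      by (simp add: emeasure_eq_ennreal_measure ennreal_le_iff)
  qed
qed

lemma V1_pos[simp]: "unit_ball_vol (real DIM('a::euclidean_space)) > 0"
  by simp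

lemma V1_ne0[simp]: "unit_ball_vol (real DIM('a::euclidean_space)) \<noteq> 0"
  using V1_pos[where 'a='a] by linarith

definition gc :: "'a::euclidean_space itself \<Rightarrow> real" where
  "gc _ = (2*pi) powr (- real DIM('a) / 2)"

lemma gc_pos: "gc TYPE('a::euclidean_space) > 0"
  by (simp add: gc_def)

lemma gc_le1: "gc TYPE('a::euclidean_space) \<le> 1"
proof -
  have "1 \<le> (2*pi) powr (real DIM('a) / 2)" by (rule ge_one_powr_ge_zero) (use pi_gt3 in auto)
  then show ?thesis by (simp add: gc_def powr_minus divide_simps)
qed

lemma dens_eq: "std_gauss_dens (x::'a::euclidean_space) = gc TYPE('a) * exp (- ((norm x)^2 / 2))"
  by (simp add: std_gauss_dens_def gc_def)

lemma dens_le: "std_gauss_dens (x::'a::euclidean_space) \<le> gc TYPE('a)"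
  using gc_pos[where 'a='a] by (simp add: dens_eq)

lemma dens_le_r: "r \<ge> 0 \<Longrightarrow> norm x \<ge> r \<Longrightarrow> std_gauss_dens (x::'a::euclidean_space) \<le> gc TYPE('a) * exp (- (r ^ 2 / 2))"
  using gc_pos[where 'a='a] by (simp add: dens_eq power_mono)

lemma dens_ge_m: "norm x \<le> m \<Longrightarrow> gc TYPE('a) * exp (- (m ^ 2 / 2)) \<le> std_gauss_dens (x::'a::euclidean_space)"
  using gc_pos[where 'a='a] by (simp add: dens_eq power_mono)

lemma gauss_measure_ge:
  fixes S :: "'a::euclidean_space set"
  assumes S: "S \<in> sets borel" "S \<subseteq> cball 0 \<rho>" and lo: "\<And>x. x \<in> S \<Longrightarrow> lo \<le> std_gauss_dens x"
    and lo0: "lo \<ge> 0"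
  shows "lo * measure lborel S \<le> measure (std_gauss :: 'a measure) S"
proof -
  have fl: "emeasure lborel S < top"
    by (rule le_less_trans[OF emeasure_mono[OF S(2)] lborel_cball_fin]) simp
  have fin: "emeasure (std_gauss :: 'a measure) S < top"
    by (rule gauss_measure_le(2)[OF S, of 1]) (use dens_le[where 'a='a] gc_le1[where 'a='a] in \<open>blast intro: order_trans\<close>)
  have "ennreal (lo * measure lborel S) \<le> emeasure (std_gauss :: 'a measure) S"
    using gauss_emeasure_ge[OF S(1) lo] fl lo0 by (simp add: emeasure_eq_ennreal_measure ennreal_mult)
  then show ?thesis using fin
    by (simp add: emeasure_eq_ennreal_measure ennreal_le_iff)
qed

lemma gauss_cball_fmeas: "cball 0 R \<in> fmeasurable (std_gauss :: 'a::euclidean_space measure)"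
  using gauss_measure_le(2)[of "cball (0::'a) R" R 1] dens_le[where 'a='a] gc_le1[where 'a='a]
  by (auto simp: fmeasurable_def intro: order_trans)

lemma GB_upper: "R \<ge> 0 \<Longrightarrow> measure (std_gauss :: 'a::euclidean_space measure) (cball 0 R)
    \<le> gc TYPE('a) * unit_ball_vol (real DIM('a)) * R ^ DIM('a)"
  using gauss_measure_le(1)[of "cball (0::'a) R" R "gc TYPE('a)"] dens_le[where 'a='a]
  by (simp add: content_cball mult.assoc)

lemma GB_lower: "R \<ge> 1 \<Longrightarrow> measure (std_gauss :: 'a::euclidean_space measure) (cball 0 R)
    \<ge> gc TYPE('a) * exp (-1/2) * unit_ball_vol (real DIM('a))"
proof -
  assume R: "R \<ge> 1"
  have "gc TYPE('a) * exp (-1/2) * unit_ball_vol (real DIM('a)) = gc TYPE('a) * exp (- (1 ^ 2 / 2)) * measure lborel (cball (0::'a) 1)"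
    by (simp add: content_cball)
  also have "\<dots> \<le> measure (std_gauss :: 'a measure) (cball 0 1)"
    by (rule gauss_measure_ge[of _ 1]) (use gc_pos[where 'a='a] in \<open>auto intro: dens_ge_m[where m=1, simplified]\<close>)
  also have "\<dots> \<le> measure (std_gauss :: 'a measure) (cball 0 R)"
    by (rule measure_mono_fmeasurable[OF _ _ gauss_cball_fmeas]) (use R in auto)
  finally show ?thesis .
qed

lemma prob_space_psi: "R \<ge> 1 \<Longrightarrow> prob_space (uniform_measure (std_gauss :: 'a::euclidean_space measure) (cball 0 R))"
proof -
  assume R: "R \<ge> 1"
  have pos: "measure (std_gauss :: 'a measure) (cball 0 R) > 0"
    using GB_lower[OF R, where 'a='a] gc_pos[where 'a='a] by (smt (verit) exp_gt_zero mult_pos_pos unit_ball_vol_pos of_nat_0_le_iff)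
  have fin: "emeasure (std_gauss :: 'a measure) (cball 0 R) < top"
    using gauss_cball_fmeas[of R, where 'a='a] by (simp add: fmeasurable_def)
  show ?thesis
    by (rule prob_space_uniform_measure) (use pos fin in \<open>auto simp: emeasure_eq_ennreal_measure\<close>)
qed

lemma psi_meas:
  assumes R: "R \<ge> 1" and S: "S \<in> sets borel"
  shows "measure (uniform_measure (std_gauss :: 'a::euclidean_space measure) (cball 0 R)) S =
     measure std_gauss (cball 0 R \<inter> S) / measure (std_gauss :: 'a measure) (cball 0 R)"
proof -
  have pos: "measure (std_gauss :: 'a measure) (cball 0 R) > 0"
    using GB_lower[OF R, where 'a='a] gc_pos[where 'a='a] by (smt (verit) exp_gt_zero mult_pos_pos unit_ball_vol_pos of_nat_0_le_iff)
  have f1: "cball 0 R \<inter> S \<in> fmeasurable (std_gauss :: 'a measure)"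
    by (rule fmeasurableI2[OF gauss_cball_fmeas]) (use S in auto)
  show ?thesis
    unfolding measure_def[of "uniform_measure _ _"]
    using f1 gauss_cball_fmeas[of R, where 'a='a] pos S
    by (simp add: emeasure_eq_measure2 divide_ennreal)
qed

lemma psi_lower:
  assumes R: "R \<ge> 1" and S: "S \<in> sets borel" and sub: "ball c 1 \<subseteq> cball 0 R \<inter> S"
    and m: "\<And>x. x \<in> ball c 1 \<Longrightarrow> norm x \<le> m"
  shows "exp (- (m ^ 2 / 2)) / R ^ DIM('a) \<le> measure (uniform_measure (std_gauss :: 'a::euclidean_space measure) (cball 0 R)) S"
proof -
  let ?G = "std_gauss :: 'a measure" and ?V = "unit_ball_vol (real DIM('a))" and ?g = "gc TYPE('a)"
  have "?g * exp (- (m ^ 2 / 2)) * ?V = ?g * exp (- (m ^ 2 / 2)) * measure lborel (ball c 1)"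
    by (simp add: content_ball)
  also have "\<dots> \<le> measure ?G (ball c 1)"
    by (rule gauss_measure_ge[of _ "R"]) (use sub gc_pos[where 'a='a] in \<open>auto intro!: dens_ge_m m\<close>)
  also have "\<dots> \<le> measure ?G (cball 0 R \<inter> S)"
    by (rule measure_mono_fmeasurable[OF sub]) (auto intro!: fmeasurableI2[OF gauss_cball_fmeas] simp: S)
  finally have num: "?g * exp (- (m ^ 2 / 2)) * ?V \<le> measure ?G (cball 0 R \<inter> S)" .
  have den: "measure ?G (cball 0 R) \<le> ?g * ?V * R ^ DIM('a)"
    using GB_upper[of R] R by simp
  have pos: "0 < ?g * ?V * R ^ DIM('a)" using gc_pos[where 'a='a] R unit_ball_vol_pos[of "real DIM('a)"] by simp
  have posd: "measure ?G (cball 0 R) > 0"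
    using GB_lower[OF R, where 'a='a] gc_pos[where 'a='a] by (smt (verit) exp_gt_zero mult_pos_pos unit_ball_vol_pos of_nat_0_le_iff)
  have "exp (- (m ^ 2 / 2)) / R ^ DIM('a) = (?g * exp (- (m ^ 2 / 2)) * ?V) / (?g * ?V * R ^ DIM('a))"
    using gc_pos[where 'a='a] R V1_pos[where 'a='a] by (simp add: field_simps)
  also have "\<dots> \<le> measure ?G (cball 0 R \<inter> S) / (?g * ?V * R ^ DIM('a))"
    by (rule divide_right_mono[OF num]) (use pos in simp)
  also have "\<dots> \<le> measure ?G (cball 0 R \<inter> S) / measure ?G (cball 0 R)"
    by (rule divide_left_mono[OF den]) (use posd pos in auto)
  finally show ?thesis using psi_meas[OF R S] by simp
qed

lemma psi_upper:
  assumes R: "R \<ge> 1" and S: "S \<in> sets borel" and r: "r \<ge> 0"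
    and big: "\<And>x. x \<in> cball 0 R \<inter> S \<Longrightarrow> norm x \<ge> r"
  shows "measure (uniform_measure (std_gauss :: 'a::euclidean_space measure) (cball 0 R)) S \<le> exp (1/2) * R ^ DIM('a) * exp (- (r ^ 2 / 2))"
proof -
  let ?G = "std_gauss :: 'a measure" and ?V = "unit_ball_vol (real DIM('a))" and ?g = "gc TYPE('a)"
  have "measure ?G (cball 0 R \<inter> S) \<le> ?g * exp (- (r ^ 2 / 2)) * measure lborel (cball 0 R \<inter> S)"
    by (rule gauss_measure_le(1)[of _ R]) (use S in \<open>auto intro!: dens_le_r r big\<close>)
  also have "\<dots> \<le> ?g * exp (- (r ^ 2 / 2)) * measure lborel (cball (0::'a) R)"
    using gc_pos[where 'a='a]
    by (intro mult_left_mono measure_mono_fmeasurable) (auto simp: S fmeasurable_def intro: lborel_cball_fin)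
  also have "\<dots> = ?g * exp (- (r ^ 2 / 2)) * ?V * R ^ DIM('a)" using R by (simp add: content_cball)
  finally have num: "measure ?G (cball 0 R \<inter> S) \<le> ?g * exp (- (r ^ 2 / 2)) * ?V * R ^ DIM('a)" .
  have den: "?g * exp (-1/2) * ?V \<le> measure ?G (cball 0 R)" by (rule GB_lower[OF R])
  have pos: "0 < ?g * exp (-1/2) * ?V" using gc_pos[where 'a='a] by simp
  have "measure ?G (cball 0 R \<inter> S) / measure ?G (cball 0 R) \<le> (?g * exp (- (r ^ 2 / 2)) * ?V * R ^ DIM('a)) / (?g * exp (-1/2) * ?V)"
    by (rule frac_le[OF _ num pos den]) (use gc_pos[where 'a='a] R in simp)
  also have "\<dots> = exp (1/2) * R ^ DIM('a) * exp (- (r ^ 2 / 2))"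
    using gc_pos[where 'a='a] V1_pos[where 'a='a] by (simp add: field_simps exp_minus)
  finally show ?thesis using psi_meas[OF R S] by simp
qed


lemma inner_sum_basis_coef:
  assumes "b \<in> Basis"
  shows "inner (\<Sum>b'\<in>Basis. c b' *\<^sub>R b') (b::'a::euclidean_space) = c b"
  using assms by (simp add: inner_sum_left inner_Basis if_distrib sum.delta' cong: if_cong)

lemma net_exists:
  fixes \<eta> :: real
  assumes eta: "0 < \<eta>" "\<eta> \<le> 1"
  shows "\<exists>N::'a::euclidean_space set. finite N \<and> card N \<le> (2 * nat \<lceil>2 * real DIM('a) / \<eta>\<rceil> + 1) ^ DIM('a)
     \<and> (\<forall>u\<in>N. norm u = 1) \<and> (\<forall>v. norm v = 1 \<longrightarrow> (\<exists>u\<in>N. norm (u - v) \<le> \<eta>))"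
proof -
  define d where "d = real DIM('a)"
  have d1: "d \<ge> 1" unfolding d_def using DIM_positive[where 'a='a] by linarith
  define h where "h = \<eta> / (2 * d)"
  have h0: "h > 0" unfolding h_def using eta d1 by simp
  define M where "M = nat \<lceil>2 * d / \<eta>\<rceil>"
  have hinv: "1 / h = 2 * d / \<eta>" unfolding h_def by simp
  have Mh: "1 / h \<le> real M" unfolding M_def hinv by linarith
  define I where "I = {- int M..int M}"
  define gf where "gf = (\<lambda>m::'a \<Rightarrow> int. \<Sum>b\<in>Basis. (real_of_int (m b) * h) *\<^sub>R b)"
  define G where "G = gf ` (PiE Basis (\<lambda>_. I))"
  define N where "N = (\<lambda>g. g /\<^sub>R norm g) ` (G - {0})"
  have finG: "finite G" unfolding G_def I_def by (intro finite_imageI finite_PiE) auto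
  have cardG: "card G \<le> (2 * M + 1) ^ DIM('a)"
  proof -
    have "card G \<le> card (PiE Basis (\<lambda>_::'a. I))" unfolding G_def
      by (rule card_image_le) (auto simp: I_def intro!: finite_PiE)
    also have "\<dots> = (card I) ^ DIM('a)" by (simp add: card_PiE)
    also have "card I = 2 * M + 1" unfolding I_def by simp
    finally show ?thesis .
  qed
  have "card N \<le> card (G - {0})" unfolding N_def
    using finG by (intro card_image_le) simp
  also have "\<dots> \<le> card G" using finG by (intro card_mono) auto
  finally have "card N \<le> card G" .
  with cardG have cardN: "card N \<le> (2 * nat \<lceil>2 * real DIM('a) / \<eta>\<rceil> + 1) ^ DIM('a)"
    by (simp add: M_def d_def)
  have finN: "finite N" unfolding N_def using finG by simp
  have unit: "\<forall>u\<in>N. norm u = 1" unfolding N_def by auto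
  have cover: "\<exists>u\<in>N. norm (u - v) \<le> \<eta>" if v: "norm v = 1" for v :: 'a
  proof -
    define m where "m = restrict (\<lambda>b. \<lfloor>inner v b / h\<rfloor>) Basis"
    have mI: "m \<in> PiE Basis (\<lambda>_. I)"
    proof -
      { fix b :: 'a assume b: "b \<in> Basis"
        have vb: "\<bar>inner v b\<bar> \<le> 1" using Basis_le_norm[OF b, of v] v by simp
        have "inner v b / h \<le> 1 / h" using vb h0 by (simp add: divide_right_mono)
        moreover have "- (1 / h) \<le> inner v b / h" using vb h0 by (simp add: divide_simps)
        ultimately have "- real M \<le> inner v b / h" "inner v b / h \<le> real M" using Mh by linarith+
        then have "\<lfloor>inner v b / h\<rfloor> \<in> I" unfolding I_def
          by (auto simp: le_floor_iff floor_le_iff) }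
      then show ?thesis unfolding m_def by auto
    qed
    define g where "g = gf m"
    have gG: "g \<in> G" unfolding g_def G_def using mI by auto
    have coef: "\<bar>inner (g - v) b\<bar> \<le> h" if b: "b \<in> Basis" for b
    proof -
      have "inner g b = real_of_int \<lfloor>inner v b / h\<rfloor> * h"
        unfolding g_def gf_def using b by (simp add: inner_sum_basis_coef m_def)
      moreover have "real_of_int \<lfloor>inner v b / h\<rfloor> * h \<le> inner v b"
        using h0 by (metis floor_divide_lower)
      moreover have "inner v b < (real_of_int \<lfloor>inner v b / h\<rfloor> + 1) * h"
        using h0 by (metis floor_divide_upper)
      ultimately show ?thesis by (simp add: inner_diff_left algebra_simps)
    qed
    have gv: "norm (g - v) \<le> \<eta> / 2"
    proof -
      have "norm (g - v) \<le> (\<Sum>b\<in>Basis. \<bar>inner (g - v) b\<bar>)" by (rule norm_le_l1)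
      also have "\<dots> \<le> (\<Sum>b\<in>(Basis::'a set). h)" by (rule sum_mono) (rule coef)
      also have "\<dots> = d * h" by (simp add: d_def)
      also have "\<dots> = \<eta> / 2" unfolding h_def using d1 by simp
      finally show ?thesis .
    qed
    have ng: "\<bar>norm g - 1\<bar> \<le> \<eta> / 2"
      using gv v norm_triangle_ineq3[of g v] by simp
    then have gpos: "norm g > 0" using eta by linarith
    define u where "u = g /\<^sub>R norm g"
    have uN: "u \<in> N" unfolding N_def u_def using gG gpos by auto
    have "norm (u - g) = \<bar>1 - norm g\<bar>"
    proof -
      have "u - g = (1 / norm g - 1) *\<^sub>R g" unfolding u_def by (simp add: algebra_simps divide_inverse)
      then have "norm (u - g) = \<bar>1 / norm g - 1\<bar> * norm g" by simp
      also have "\<dots> = \<bar>1 - norm g\<bar>" using gpos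
      proof -
        have "\<bar>1 / norm g - 1\<bar> * norm g = \<bar>(1 / norm g - 1) * norm g\<bar>" using gpos by (simp add: abs_mult)
        also have "(1 / norm g - 1) * norm g = 1 - norm g" using gpos by (simp add: left_diff_distrib)
        finally show ?thesis .
      qed
      finally show ?thesis .
    qed
    then have "norm (u - v) \<le> \<eta>"
      using norm_triangle_ineq[of "u - g" "g - v"] gv ng abs_minus_commute[of 1 "norm g"] by simp
    with uN show ?thesis by blast
  qed
  show ?thesis using finN cardN unit cover by blast
qed

lemma ball_in_hull:
  fixes \<omega> :: "nat \<Rightarrow> 'a::euclidean_space"
  assumes H: "\<And>v. norm v = 1 \<Longrightarrow> \<exists>i<k. inner (\<omega> i) v \<ge> r"
  shows "cball 0 r \<subseteq> convex hull (\<omega> ` {..<k})"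
proof
  fix x :: 'a assume x: "x \<in> cball 0 r"
  show "x \<in> convex hull (\<omega> ` {..<k})"
  proof (rule ccontr)
    assume nx: "x \<notin> convex hull (\<omega> ` {..<k})"
    have "closed (convex hull (\<omega> ` {..<k}))"
      by (simp add: compact_imp_closed finite_imp_compact_convex_hull)
    then obtain a b where ab: "inner a x < b" "\<forall>y\<in>convex hull (\<omega> ` {..<k}). inner a y > b"
      using separating_hyperplane_closed_point[OF convex_convex_hull _ nx] by blast
    obtain e :: 'a where e: "e \<in> Basis" using nonempty_Basis by blast
    then have "norm e = 1" by simp
    from H[OF this] obtain i0 where "i0 < k" by blast
    then have "\<omega> i0 \<in> convex hull (\<omega> ` {..<k})" by (intro hull_inc) auto
    with ab have "a \<noteq> 0" by auto
    define v where "v = - a /\<^sub>R norm a"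
    have nv: "norm v = 1" unfolding v_def using \<open>a \<noteq> 0\<close> by simp
    from H[OF nv] obtain i where i: "i < k" "inner (\<omega> i) v \<ge> r" by blast
    have "\<omega> i \<in> convex hull (\<omega> ` {..<k})" using i by (intro hull_inc) auto
    with ab have "inner a (\<omega> i) > inner a x" by auto
    then have "inner (\<omega> i) v < inner x v"
      unfolding v_def using \<open>a \<noteq> 0\<close> by (simp add: inner_commute divide_simps)
    also have "\<dots> \<le> norm x * norm v" by (rule Cauchy_Schwarz_ineq2[THEN abs_le_D1])
    also have "\<dots> \<le> r" using x nv by simp
    finally show False using i by simp
  qed
qed

lemma hull_extend:
  fixes \<omega> :: "nat \<Rightarrow> 'a::euclidean_space"
  assumes "n \<le> n'" "\<And>i. n \<le> i \<Longrightarrow> i < n' \<Longrightarrow> \<omega> i \<in> convex hull (\<omega> ` {..<n})"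
  shows "convex hull (\<omega> ` {..<n'}) = convex hull (\<omega> ` {..<n})"
proof
  show "convex hull (\<omega> ` {..<n'}) \<subseteq> convex hull (\<omega> ` {..<n})"
  proof (rule hull_minimal)
    show "\<omega> ` {..<n'} \<subseteq> convex hull (\<omega> ` {..<n})"
    proof
      fix y assume "y \<in> \<omega> ` {..<n'}"
      then obtain i where "i < n'" "y = \<omega> i" by auto
      then show "y \<in> convex hull (\<omega> ` {..<n})"
        using assms(2)[of i] by (cases "i < n") (auto intro: hull_inc)
    qed
  qed (rule convex_convex_hull)
  show "convex hull (\<omega> ` {..<n}) \<subseteq> convex hull (\<omega> ` {..<n'})"
    using assms(1) by (intro hull_mono image_mono) auto
qed

lemma hull_vol_bound:
  fixes \<omega> :: "nat \<Rightarrow> 'a::euclidean_space"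
  assumes "R \<ge> 0" "\<And>i. i < k \<Longrightarrow> \<omega> i \<in> cball 0 R"
  shows "hull_vol k \<omega> \<le> unit_ball_vol (real DIM('a)) * R ^ DIM('a)" "hull_vol k \<omega> \<ge> 0"
proof -
  have sub: "convex hull (\<omega> ` {..<k}) \<subseteq> cball 0 R"
    using assms(2) by (intro hull_minimal) auto
  have "measure lborel (convex hull (\<omega> ` {..<k})) \<le> measure lborel (cball (0::'a) R)"
  proof (rule measure_mono_fmeasurable[OF sub])
    show "convex hull (\<omega> ` {..<k}) \<in> sets lborel"
      by (simp add: finite_imp_compact_convex_hull compact_imp_closed borel_closed)
    show "cball (0::'a) R \<in> fmeasurable lborel"
      using lborel_cball_fin[of "0::'a" R] by (simp add: fmeasurable_def)
  qed
  then show "hull_vol k \<omega> \<le> unit_ball_vol (real DIM('a)) * R ^ DIM('a)"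
    using assms(1) by (simp add: hull_vol_def content_cball)
  show "hull_vol k \<omega> \<ge> 0" by (simp add: hull_vol_def)
qed


lemma (in prob_space) abs_expect_le_indicator:
  fixes F :: "'a \<Rightarrow> real"
  assumes F: "F \<in> borel_measurable M" and C: "C \<ge> 0" and D: "D \<in> sets M"
    and bd: "AE x in M. \<bar>F x\<bar> \<le> C * indicator D x"
  shows "\<bar>expectation F\<bar> \<le> C * prob D"
proof -
  have intF: "integrable M F"
  proof (rule integrable_const_bound[of _ C])
    have h: "\<And>x. \<bar>F x\<bar> \<le> C * indicator D x \<Longrightarrow> norm (F x) \<le> C"
      using C by (case_tac "x \<in> D") auto
    show "AE x in M. norm (F x) \<le> C"
      using bd by (rule eventually_mono) (rule h)
  qed (rule F)
  have intI: "integrable M (\<lambda>x. C * indicator D x)"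
    by (intro integrable_mult_right integrable_const_bound[where B=1] borel_measurable_indicator D) (auto simp: indicator_def)
  have "\<bar>expectation F\<bar> \<le> expectation (\<lambda>x. \<bar>F x\<bar>)"
    using integral_norm_bound[of M F] by simp
  also have "\<dots> \<le> expectation (\<lambda>x. C * indicator D x)"
    by (rule integral_mono_AE) (use intF intI bd in auto)
  also have "\<dots> = C * prob D" using D by simp
  finally show ?thesis .
qed

lemma (in prob_space) coupling_bounds:
  fixes X Y :: "'a \<Rightarrow> real"
  assumes X[measurable]: "X \<in> borel_measurable M" and Y[measurable]: "Y \<in> borel_measurable M"
    and bX: "AE x in M. 0 \<le> X x \<and> X x \<le> B" and bY: "AE x in M. 0 \<le> Y x \<and> Y x \<le> B"
    and D[measurable]: "D \<in> sets M" and XY: "\<And>x. x \<in> space M \<Longrightarrow> X x \<noteq> Y x \<Longrightarrow> x \<in> D"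
    and q: "prob D \<le> q" and B: "B \<ge> 0"
  shows "\<bar>expectation X - expectation Y\<bar> \<le> B * q"
    and "\<bar>expectation (\<lambda>x. (X x - expectation X)\<^sup>2) - expectation (\<lambda>x. (Y x - expectation Y)\<^sup>2)\<bar> \<le> 3 * B\<^sup>2 * q"
    and "\<bar>prob {x\<in>space M. X x \<le> t} - prob {x\<in>space M. Y x \<le> t}\<bar> \<le> q"
proof -
  have iX: "integrable M X"
    by (rule integrable_const_bound[of _ B]) (use bX in \<open>auto elim!: AE_mp\<close>)
  have iY: "integrable M Y"
    by (rule integrable_const_bound[of _ B]) (use bY in \<open>auto elim!: AE_mp\<close>)
  have iX2: "integrable M (\<lambda>x. (X x)\<^sup>2)"
    by (rule integrable_const_bound[of _ "B^2"]) (use bX in \<open>auto elim!: AE_mp intro: power_mono\<close>)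
  have iY2: "integrable M (\<lambda>x. (Y x)\<^sup>2)"
    by (rule integrable_const_bound[of _ "B^2"]) (use bY in \<open>auto elim!: AE_mp intro: power_mono\<close>)
  have AEs: "AE x in M. x \<in> space M" by simp
  have m1: "\<bar>expectation (\<lambda>x. X x - Y x)\<bar> \<le> B * prob D"
  proof (rule abs_expect_le_indicator[OF _ B D])
    show "AE x in M. \<bar>X x - Y x\<bar> \<le> B * indicator D x"
      using bX bY AEs by eventually_elim (auto simp: indicator_def dest: XY)
  qed measurable
  have EXY: "expectation (\<lambda>x. X x - Y x) = expectation X - expectation Y"
    using iX iY by simp
  have p0: "prob D \<ge> 0" by simp
  have q0: "q \<ge> 0" using p0 q by linarith
  show mean: "\<bar>expectation X - expectation Y\<bar> \<le> B * q"
    using m1 EXY mult_left_mono[OF q B] by linarith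
  have m2: "\<bar>expectation (\<lambda>x. (X x)\<^sup>2 - (Y x)\<^sup>2)\<bar> \<le> B\<^sup>2 * prob D"
  proof (rule abs_expect_le_indicator[OF _ _ D])
    show "AE x in M. \<bar>(X x)\<^sup>2 - (Y x)\<^sup>2\<bar> \<le> B\<^sup>2 * indicator D x"
    proof (use bX bY AEs in eventually_elim)
      case (elim x)
      have "(X x)\<^sup>2 \<le> B\<^sup>2" "(Y x)\<^sup>2 \<le> B\<^sup>2" using elim by (auto intro: power_mono)
      moreover have "(X x)\<^sup>2 \<ge> 0" "(Y x)\<^sup>2 \<ge> 0" by auto
      ultimately have "\<bar>(X x)\<^sup>2 - (Y x)\<^sup>2\<bar> \<le> B\<^sup>2" by linarith
      then show ?case using XY[of x] elim by (auto simp: indicator_def)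
    qed
  qed auto
  have E2: "expectation (\<lambda>x. (X x)\<^sup>2 - (Y x)\<^sup>2) = expectation (\<lambda>x. (X x)\<^sup>2) - expectation (\<lambda>x. (Y x)\<^sup>2)"
    using iX2 iY2 by simp
  have EX: "\<bar>expectation X\<bar> \<le> B"
  proof -
    have "\<bar>expectation X\<bar> \<le> expectation (\<lambda>x. \<bar>X x\<bar>)" using integral_norm_bound[of M X] by simp
    also have "\<dots> \<le> expectation (\<lambda>x. B)"
      by (rule integral_mono_AE) (use iX bX in \<open>auto elim!: AE_mp\<close>)
    finally show ?thesis by (simp add: prob_space)
  qed
  have EY: "\<bar>expectation Y\<bar> \<le> B"
  proof -
    have "\<bar>expectation Y\<bar> \<le> expectation (\<lambda>x. \<bar>Y x\<bar>)" using integral_norm_bound[of M Y] by simp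
    also have "\<dots> \<le> expectation (\<lambda>x. B)"
      by (rule integral_mono_AE) (use iY bY in \<open>auto elim!: AE_mp\<close>)
    finally show ?thesis by (simp add: prob_space)
  qed
  have sq: "\<bar>(expectation X)\<^sup>2 - (expectation Y)\<^sup>2\<bar> \<le> 2 * B\<^sup>2 * q"
  proof -
    have "\<bar>(expectation X)\<^sup>2 - (expectation Y)\<^sup>2\<bar> = \<bar>expectation X - expectation Y\<bar> * \<bar>expectation X + expectation Y\<bar>"
      by (simp add: power2_eq_square algebra_simps abs_mult[symmetric])
    also have "\<dots> \<le> (B * q) * (2 * B)"
    proof (rule mult_mono[OF mean])
      show "\<bar>expectation X + expectation Y\<bar> \<le> 2 * B" using EX EY by linarith
      show "0 \<le> B * q" using B q0 by (rule mult_nonneg_nonneg)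
    qed simp
    also have "(B * q) * (2 * B) = 2 * B\<^sup>2 * q" by (simp add: power2_eq_square)
    finally show ?thesis .
  qed
  have "\<bar>expectation (\<lambda>x. (X x)\<^sup>2) - expectation (\<lambda>x. (Y x)\<^sup>2)\<bar> \<le> B\<^sup>2 * q"
    using m2 E2 mult_left_mono[OF q zero_le_power2[of B]] by linarith
  then show "\<bar>expectation (\<lambda>x. (X x - expectation X)\<^sup>2) - expectation (\<lambda>x. (Y x - expectation Y)\<^sup>2)\<bar> \<le> 3 * B\<^sup>2 * q"
    using sq variance_eq[OF iX iX2] variance_eq[OF iY iY2] by linarith
  let ?A = "{x\<in>space M. X x \<le> t}" and ?A' = "{x\<in>space M. Y x \<le> t}"
  have sA: "?A \<in> sets M" "?A' \<in> sets M" by measurable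
  have "prob ?A \<le> prob (?A' \<union> D)" by (rule finite_measure_mono) (use XY in fastforce, simp)
  also have "\<dots> \<le> prob ?A' + prob D" by (rule measure_Un_le) (use sA in auto)
  finally have 1: "prob ?A \<le> prob ?A' + prob D" .
  have "prob ?A' \<le> prob (?A \<union> D)" by (rule finite_measure_mono) (use XY in fastforce, simp)
  also have "\<dots> \<le> prob ?A + prob D" by (rule measure_Un_le) (use sA in auto)
  finally have 2: "prob ?A' \<le> prob ?A + prob D" .
  show "\<bar>prob ?A - prob ?A'\<bar> \<le> q" using 1 2 q by linarith
qed


lemma cyl_measure:
  fixes P :: "'a measure"
  assumes Pp: "prob_space P" and J: "J \<subseteq> I" "finite J" and S: "S \<in> sets P"
  shows "{\<omega>\<in>space (PiM I (\<lambda>_. P)). \<forall>i\<in>J. \<omega> i \<in> S} \<in> sets (PiM I (\<lambda>_. P))"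
    "measure (PiM I (\<lambda>_. P)) {\<omega>\<in>space (PiM I (\<lambda>_. P)). \<forall>i\<in>J. \<omega> i \<in> S} = measure P S ^ card J"
proof -
  interpret Pp: prob_space P by (rule Pp)
  have eq: "{\<omega>\<in>space (PiM I (\<lambda>_. P)). \<forall>i\<in>J. \<omega> i \<in> S} = prod_emb I (\<lambda>_. P) J (PiE J (\<lambda>_. S))"
    using J by (auto simp: prod_emb_def PiE_iff space_PiM extensional_def)
  show "{\<omega>\<in>space (PiM I (\<lambda>_. P)). \<forall>i\<in>J. \<omega> i \<in> S} \<in> sets (PiM I (\<lambda>_. P))"
    unfolding eq using J S by (intro sets_PiM_I) auto
  have "emeasure (PiM I (\<lambda>_. P)) (prod_emb I (\<lambda>_. P) J (PiE J (\<lambda>_. S))) = (\<Prod>i\<in>J. emeasure P S)"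
    by (rule emeasure_PiM_emb) (use Pp J S in auto)
  also have "\<dots> = ennreal (measure P S ^ card J)"
    by (simp add: Pp.emeasure_eq_measure prod_ennreal ennreal_power)
  finally show "measure (PiM I (\<lambda>_. P)) {\<omega>\<in>space (PiM I (\<lambda>_. P)). \<forall>i\<in>J. \<omega> i \<in> S} = measure P S ^ card J"
    unfolding eq measure_def by simp
qed


lemma event_bound:
  fixes P :: "'a::euclidean_space measure"
  assumes Pp: "prob_space P" and sP: "sets P = sets borel"
    and R: "R \<ge> 0" and P0: "measure P (- cball 0 R) = 0"
    and N: "finite N" "\<And>v. norm v = 1 \<Longrightarrow> \<exists>u\<in>N. norm (u - v) \<le> \<eta>" and eta: "\<eta> \<ge> 0"
    and ar: "r \<le> a - \<eta> * R"
    and pfail: "\<And>u. u \<in> N \<Longrightarrow> measure P {x. inner x u < a} \<le> 1 - p"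
    and ptail: "measure P {x. norm x > r} \<le> \<tau>"
    and nn: "n \<le> n'"
  shows "\<exists>D \<in> sets (PiM {..<n'} (\<lambda>_. P)).
      (\<forall>\<omega>\<in>space (PiM {..<n'} (\<lambda>_. P)). hull_vol n' \<omega> \<noteq> hull_vol n \<omega> \<longrightarrow> \<omega> \<in> D) \<and>
      measure (PiM {..<n'} (\<lambda>_. P)) D \<le> real (card N) * (1 - p) ^ n + real (n' - n) * \<tau>"
    and "AE \<omega> in PiM {..<n'} (\<lambda>_. P). \<forall>i<n'. \<omega> i \<in> cball 0 R"
proof -
  let ?M = "PiM {..<n'} (\<lambda>_. P)"
  interpret Pp: prob_space P by (rule Pp)
  interpret PP: product_prob_space "\<lambda>_::nat. P" "{..<n'}"
    by (intro product_prob_spaceI) (rule Pp)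
  have setsP: "S \<in> sets P" if "S \<in> sets borel" for S using that sP by simp
  define B0 where "B0 = (\<Union>i\<in>{..<n'}. {\<omega>\<in>space ?M. \<forall>j\<in>{i}. \<omega> j \<in> - cball 0 R})"
  define B1 where "B1 = (\<Union>u\<in>N. {\<omega>\<in>space ?M. \<forall>j\<in>{..<n}. \<omega> j \<in> {x. inner x u < a}})"
  define B2 where "B2 = (\<Union>i\<in>{n..<n'}. {\<omega>\<in>space ?M. \<forall>j\<in>{i}. \<omega> j \<in> {x. norm x > r}})"
  have m_lt: "{x::'a. inner x u < a} \<in> sets borel" for u by measurable
  have m_gt: "{x::'a. norm x > r} \<in> sets borel" by measurable
  have m_c: "- cball (0::'a) R \<in> sets borel" by measurable
  have sB0: "B0 \<in> sets ?M" unfolding B0_def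
    by (intro sets.finite_UN cyl_measure(1)[OF Pp] setsP m_c) auto
  have sB1: "B1 \<in> sets ?M" unfolding B1_def using N(1) nn
    by (intro sets.finite_UN cyl_measure(1)[OF Pp] setsP m_lt) auto
  have sB2: "B2 \<in> sets ?M" unfolding B2_def
    by (intro sets.finite_UN cyl_measure(1)[OF Pp] setsP m_gt) auto
  have pB0: "measure ?M B0 = 0"
  proof -
    have "measure ?M B0 \<le> (\<Sum>i\<in>{..<n'}. measure ?M {\<omega>\<in>space ?M. \<forall>j\<in>{i}. \<omega> j \<in> - cball 0 R})"
      unfolding B0_def
    proof (rule PP.finite_measure_subadditive_finite)
      show "(\<lambda>i. {\<omega>\<in>space ?M. \<forall>j\<in>{i}. \<omega> j \<in> - cball 0 R}) ` {..<n'} \<subseteq> PP.events"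
        by (rule image_subsetI, rule cyl_measure(1)[OF Pp]) (auto intro!: setsP m_c)
    qed simp
    also have "\<dots> = 0"
      by (intro sum.neutral ballI) (subst cyl_measure(2)[OF Pp], auto intro!: setsP m_c simp: P0)
    finally show ?thesis by (simp add: measure_nonneg antisym)
  qed
  have pB1: "measure ?M B1 \<le> real (card N) * (1 - p) ^ n"
  proof -
    have "measure ?M B1 \<le> (\<Sum>u\<in>N. measure ?M {\<omega>\<in>space ?M. \<forall>j\<in>{..<n}. \<omega> j \<in> {x. inner x u < a}})"
      unfolding B1_def
    proof (rule PP.finite_measure_subadditive_finite)
      show "(\<lambda>u. {\<omega>\<in>space ?M. \<forall>j\<in>{..<n}. \<omega> j \<in> {x. inner x u < a}}) ` N \<subseteq> PP.events"
        by (rule image_subsetI, rule cyl_measure(1)[OF Pp]) (use nn in \<open>auto intro!: setsP m_lt\<close>)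
    qed (rule N(1))
    also have "\<dots> = (\<Sum>u\<in>N. measure P {x. inner x u < a} ^ n)"
      using nn by (intro sum.cong refl) (subst cyl_measure(2)[OF Pp], auto intro!: setsP m_lt)
    also have "\<dots> \<le> (\<Sum>u\<in>N. (1 - p) ^ n)"
      by (intro sum_mono power_mono pfail) auto
    also have "\<dots> = real (card N) * (1 - p) ^ n" by simp
    finally show ?thesis .
  qed
  have pB2: "measure ?M B2 \<le> real (n' - n) * \<tau>"
  proof -
    have "measure ?M B2 \<le> (\<Sum>i\<in>{n..<n'}. measure ?M {\<omega>\<in>space ?M. \<forall>j\<in>{i}. \<omega> j \<in> {x. norm x > r}})"
      unfolding B2_def
    proof (rule PP.finite_measure_subadditive_finite)
      show "(\<lambda>i. {\<omega>\<in>space ?M. \<forall>j\<in>{i}. \<omega> j \<in> {x. norm x > r}}) ` {n..<n'} \<subseteq> PP.events"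
        by (rule image_subsetI, rule cyl_measure(1)[OF Pp]) (auto intro!: setsP m_gt)
    qed simp
    also have "\<dots> = (\<Sum>i\<in>{n..<n'}. measure P {x. norm x > r})"
      by (intro sum.cong refl) (subst cyl_measure(2)[OF Pp], auto intro!: setsP m_gt)
    also have "\<dots> \<le> (\<Sum>i\<in>{n..<n'}. \<tau>)"
      by (intro sum_mono ptail)
    also have "\<dots> = real (n' - n) * \<tau>" by simp
    finally show ?thesis .
  qed
  define D where "D = B0 \<union> B1 \<union> B2"
  have sD: "D \<in> sets ?M" unfolding D_def using sB0 sB1 sB2 by auto
  have pD: "measure ?M D \<le> real (card N) * (1 - p) ^ n + real (n' - n) * \<tau>"
  proof -
    have "measure ?M D \<le> measure ?M (B0 \<union> B1) + measure ?M B2"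
      unfolding D_def by (rule measure_Un_le) (use sB0 sB1 sB2 in auto)
    also have "measure ?M (B0 \<union> B1) \<le> measure ?M B0 + measure ?M B1"
      by (rule measure_Un_le) (use sB0 sB1 in auto)
    finally show ?thesis using pB0 pB1 pB2 by linarith
  qed
  have key: "hull_vol n' \<omega> = hull_vol n \<omega>" if \<omega>: "\<omega> \<in> space ?M" "\<omega> \<notin> D" for \<omega>
  proof -
    have inR: "\<omega> i \<in> cball 0 R" if "i < n'" for i
      using \<omega> that unfolding D_def B0_def by auto
    have cov: "\<exists>i<n. inner (\<omega> i) v \<ge> r" if v: "norm v = 1" for v
    proof -
      obtain u where u: "u \<in> N" "norm (u - v) \<le> \<eta>" using N(2)[OF v] by blast
      then obtain i where i: "i < n" "inner (\<omega> i) u \<ge> a"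
        using \<omega> unfolding D_def B1_def by (auto simp: not_less)
      have "norm (\<omega> i) \<le> R" using inR[of i] i nn by auto
      have "\<bar>inner (\<omega> i) (v - u)\<bar> \<le> norm (\<omega> i) * norm (v - u)" by (rule Cauchy_Schwarz_ineq2)
      also have "\<dots> \<le> R * \<eta>"
        using \<open>norm (\<omega> i) \<le> R\<close> u(2) eta R by (intro mult_mono) (auto simp: norm_minus_commute)
      finally have "inner (\<omega> i) v \<ge> inner (\<omega> i) u - R * \<eta>"
        by (simp add: inner_diff_right)
      then show ?thesis using i ar by (intro exI[of _ i]) (auto simp: mult.commute)
    qed
    have ball: "cball 0 r \<subseteq> convex hull (\<omega> ` {..<n})" by (rule ball_in_hull) (use cov in auto)
    have "convex hull (\<omega> ` {..<n'}) = convex hull (\<omega> ` {..<n})"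
    proof (rule hull_extend[OF nn])
      fix i assume "n \<le> i" "i < n'"
      then have "norm (\<omega> i) \<le> r" using \<omega> unfolding D_def B2_def by (auto simp: not_less)
      then show "\<omega> i \<in> convex hull (\<omega> ` {..<n})" using ball by auto
    qed
    then show ?thesis by (simp add: hull_vol_def)
  qed
  show "\<exists>D \<in> sets ?M.
      (\<forall>\<omega>\<in>space ?M. hull_vol n' \<omega> \<noteq> hull_vol n \<omega> \<longrightarrow> \<omega> \<in> D) \<and>
      measure ?M D \<le> real (card N) * (1 - p) ^ n + real (n' - n) * \<tau>"
    using sD pD key by blast
  show "AE \<omega> in ?M. \<forall>i<n'. \<omega> i \<in> cball 0 R"
  proof (rule AE_I[of _ _ B0])
    show "{\<omega> \<in> space ?M. \<not> (\<forall>i<n'. \<omega> i \<in> cball 0 R)} \<subseteq> B0" unfolding B0_def by auto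
    show "emeasure ?M B0 = 0" using pB0 sB0 by (simp add: PP.emeasure_eq_measure)
    show "B0 \<in> sets ?M" by (rule sB0)
  qed
qed


lemma hull_vol_measurable:
  assumes "sets P = sets (borel :: 'a::euclidean_space measure)"
  shows "hull_vol k \<in> borel_measurable (PiM {..<k} (\<lambda>_. P))"
proof -
  have "sets (PiM {..<k} (\<lambda>_. P)) = sets (PiM {..<k} (\<lambda>_. borel :: 'a measure))"
    by (rule sets_PiM_cong) (use assms in auto)
  then show ?thesis using hull_vol_measurable_borel[of k, where 'a='a]
    by (subst measurable_cong_sets[OF _ refl]) auto
qed

lemma hull_vol_restrict: "hull_vol n (restrict \<omega> {..<n}) = hull_vol n \<omega>"
proof -
  have "restrict \<omega> {..<n} ` {..<n} = \<omega> ` {..<n}" by auto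
  then show ?thesis by (simp add: hull_vol_def)
qed

lemma transfer_all:
  fixes P :: "'a::euclidean_space measure"
  assumes Pp: "prob_space P" and sP: "sets P = sets borel" and nn: "n \<le> n'" and R: "R \<ge> 0"
    and D: "D \<in> sets (PiM {..<n'} (\<lambda>_. P))"
    and XY: "\<forall>\<omega>\<in>space (PiM {..<n'} (\<lambda>_. P)). hull_vol n' \<omega> \<noteq> hull_vol n \<omega> \<longrightarrow> \<omega> \<in> D"
    and q: "measure (PiM {..<n'} (\<lambda>_. P)) D \<le> q"
    and AEb: "AE \<omega> in PiM {..<n'} (\<lambda>_. P). \<forall>i<n'. \<omega> i \<in> cball 0 R"
  defines "Vb \<equiv> unit_ball_vol (real DIM('a)) * R ^ DIM('a)"
  shows "\<bar>integral\<^sup>L (PiM {..<n'} (\<lambda>_. P)) (hull_vol n') - integral\<^sup>L (PiM {..<n} (\<lambda>_. P)) (hull_vol n)\<bar> \<le> Vb * q"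
    and "\<bar>integral\<^sup>L (PiM {..<n'} (\<lambda>_. P)) (\<lambda>\<omega>. (hull_vol n' \<omega> - integral\<^sup>L (PiM {..<n'} (\<lambda>_. P)) (hull_vol n'))\<^sup>2)
          - integral\<^sup>L (PiM {..<n} (\<lambda>_. P)) (\<lambda>\<omega>. (hull_vol n \<omega> - integral\<^sup>L (PiM {..<n} (\<lambda>_. P)) (hull_vol n))\<^sup>2)\<bar> \<le> 3 * Vb\<^sup>2 * q"
    and "\<bar>measure (PiM {..<n'} (\<lambda>_. P)) {\<omega>\<in>space (PiM {..<n'} (\<lambda>_. P)). hull_vol n' \<omega> \<le> t}
          - measure (PiM {..<n} (\<lambda>_. P)) {\<omega>\<in>space (PiM {..<n} (\<lambda>_. P)). hull_vol n \<omega> \<le> t}\<bar> \<le> q"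
proof -
  let ?M = "PiM {..<n'} (\<lambda>_. P)" and ?Q = "PiM {..<n} (\<lambda>_. P)"
  interpret PP: product_prob_space "\<lambda>_::nat. P" "{..<n'}"
    by (intro product_prob_spaceI) (rule Pp)
  have dist: "?Q = distr ?M ?Q (\<lambda>f. restrict f {..<n})"
    by (rule PP.distr_restrict) (use nn in auto)
  have mr: "(\<lambda>f. restrict f {..<n}) \<in> measurable ?M ?Q"
    by (rule measurable_restrict_subset) (use nn in auto)
  have h0: "hull_vol n \<in> borel_measurable ?Q" by (rule hull_vol_measurable[OF sP])
  have h1: "hull_vol n' \<in> borel_measurable ?M" by (rule hull_vol_measurable[OF sP])
  have h0': "hull_vol n \<in> borel_measurable ?M"
  proof -
    have "(\<lambda>\<omega>. hull_vol n (restrict \<omega> {..<n})) \<in> borel_measurable ?M"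
      using h0 mr by measurable
    then show ?thesis by (simp add: hull_vol_restrict)
  qed
  have I1: "integral\<^sup>L ?Q f = integral\<^sup>L ?M (\<lambda>\<omega>. f (restrict \<omega> {..<n}))" if "f \<in> borel_measurable ?Q" for f :: "_ \<Rightarrow> real"
    by (subst dist) (rule integral_distr[OF mr that])
  have E0: "integral\<^sup>L ?Q (hull_vol n) = integral\<^sup>L ?M (hull_vol n)"
    using I1[OF h0] by (simp add: hull_vol_restrict)
  have V0: "integral\<^sup>L ?Q (\<lambda>\<omega>. (hull_vol n \<omega> - integral\<^sup>L ?Q (hull_vol n))\<^sup>2)
      = integral\<^sup>L ?M (\<lambda>\<omega>. (hull_vol n \<omega> - integral\<^sup>L ?M (hull_vol n))\<^sup>2)"
    by (subst I1) (use h0 in \<open>measurable\<close>, simp add: hull_vol_restrict E0)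
  have C0: "measure ?Q {\<omega>\<in>space ?Q. hull_vol n \<omega> \<le> t} = measure ?M {\<omega>\<in>space ?M. hull_vol n \<omega> \<le> t}"
  proof -
    have s: "{\<omega>\<in>space ?Q. hull_vol n \<omega> \<le> t} \<in> sets ?Q" using h0 by measurable
    have "measure ?Q {\<omega>\<in>space ?Q. hull_vol n \<omega> \<le> t} =
        measure ?M ((\<lambda>f. restrict f {..<n}) -` {\<omega>\<in>space ?Q. hull_vol n \<omega> \<le> t} \<inter> space ?M)"
      by (subst dist) (rule measure_distr[OF mr s])
    also have "(\<lambda>f. restrict f {..<n}) -` {\<omega>\<in>space ?Q. hull_vol n \<omega> \<le> t} \<inter> space ?M = {\<omega>\<in>space ?M. hull_vol n \<omega> \<le> t}"
      using measurable_space[OF mr] by (auto simp: hull_vol_restrict)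
    finally show ?thesis .
  qed
  have Vb0: "Vb \<ge> 0" unfolding Vb_def using R by simp
  have bX: "AE \<omega> in ?M. 0 \<le> hull_vol n' \<omega> \<and> hull_vol n' \<omega> \<le> Vb"
    using AEb by eventually_elim (use R in \<open>auto simp: Vb_def intro: hull_vol_bound\<close>)
  have bY: "AE \<omega> in ?M. 0 \<le> hull_vol n \<omega> \<and> hull_vol n \<omega> \<le> Vb"
    using AEb by eventually_elim (use R nn in \<open>auto simp: Vb_def intro!: hull_vol_bound\<close>)
  have XY': "\<And>\<omega>. \<omega> \<in> space ?M \<Longrightarrow> hull_vol n' \<omega> \<noteq> hull_vol n \<omega> \<Longrightarrow> \<omega> \<in> D"
    using XY by blast
  note cb = PP.coupling_bounds[OF h1 h0' bX bY D XY' q Vb0]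
  show "\<bar>integral\<^sup>L ?M (hull_vol n') - integral\<^sup>L ?Q (hull_vol n)\<bar> \<le> Vb * q"
    using cb(1) E0 by simp
  show "\<bar>integral\<^sup>L ?M (\<lambda>\<omega>. (hull_vol n' \<omega> - integral\<^sup>L ?M (hull_vol n'))\<^sup>2)
          - integral\<^sup>L ?Q (\<lambda>\<omega>. (hull_vol n \<omega> - integral\<^sup>L ?Q (hull_vol n))\<^sup>2)\<bar> \<le> 3 * Vb\<^sup>2 * q"
    using cb(2) V0 by simp
  show "\<bar>measure ?M {\<omega>\<in>space ?M. hull_vol n' \<omega> \<le> t} - measure ?Q {\<omega>\<in>space ?Q. hull_vol n \<omega> \<le> t}\<bar> \<le> q"
    using cb(3) C0 by simp
qed


lemma radius_facts:
  fixes c0 :: real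
  assumes c0: "c0 \<ge> 0" and n: "n \<ge> 16"
  defines "s \<equiv> sqrt (2 * ln (real n))"
  shows "s \<le> radius c0 n" "radius c0 n \<le> sqrt (1 + c0 / 2) * s" "s \<ge> 2"
proof -
  let ?L = "ln (real n)"
  have L: "?L \<ge> ln 16" using n by simp
  have "ln 16 > (2::real)"
  proof -
    have e2: "exp (2::real) = exp 1 * exp 1" by (simp add: exp_add[symmetric])
    have "exp (1::real) \<le> 3" using exp_le by simp
    then have "exp 1 * exp 1 \<le> (3::real) * 3" by (intro mult_mono) auto
    then have "exp (2::real) < 16" using e2 by simp
    then show ?thesis by (metis exp_less_cancel_iff exp_ln zero_less_numeral)
  qed
  then have L2: "?L > 2" using L by linarith
  have lnL: "ln ?L > 0" using L2 by simp
  have lnL2: "ln ?L \<le> ?L" using L2 by (simp add: ln_le_minus_one[of ?L] ln_bound)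
  have rad: "radius c0 n = sqrt (2 * ?L + c0 * ln ?L)"
    unfolding radius_def using L2 by (simp add: ln_powr)
  show "s \<le> radius c0 n" unfolding rad s_def using c0 lnL by (intro real_sqrt_le_mono) simp
  have "2 * ?L + c0 * ln ?L \<le> (1 + c0/2) * (2 * ?L)"
    using c0 lnL2 by (simp add: algebra_simps mult_left_mono)
  then have "radius c0 n \<le> sqrt ((1 + c0/2) * (2 * ?L))" unfolding rad by (rule real_sqrt_le_mono)
  then show "radius c0 n \<le> sqrt (1 + c0 / 2) * s" unfolding s_def by (simp add: real_sqrt_mult)
  show "s \<ge> 2" unfolding s_def using L2 by (simp add: real_le_rsqrt)
qed


lemma psi_bound:
  fixes c0 :: real and n n' :: nat
  assumes c0: "c0 \<ge> 0" and n: "n \<ge> 16" and sbig: "sqrt (2 * ln (real n)) \<ge> 4 + sqrt (1 + c0 / 2)"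
    and nn: "n \<le> n'"
  defines "s \<equiv> sqrt (2 * ln (real n))" and "\<kappa> \<equiv> sqrt (1 + c0 / 2)" and "R \<equiv> radius c0 n"
  defines "Vb \<equiv> unit_ball_vol (real DIM('a::euclidean_space)) * R ^ DIM('a)"
    and "p \<equiv> exp (- ((s - 1)\<^sup>2 / 2)) / R ^ DIM('a)"
    and "\<tau> \<equiv> exp (1/2) * R ^ DIM('a) * exp (- ((s - 3 - \<kappa>)\<^sup>2 / 2))"
    and "Cn \<equiv> real ((2 * nat \<lceil>2 * real DIM('a) * s\<rceil> + 1) ^ DIM('a))"
  defines "q \<equiv> Cn * (1 - p) ^ n + real (n' - n) * \<tau>"
  shows "\<bar>vol_mean TYPE('a) c0 n n' - vol_mean TYPE('a) c0 n n\<bar> \<le> Vb * q"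
    and "\<bar>vol_var TYPE('a) c0 n n' - vol_var TYPE('a) c0 n n\<bar> \<le> 3 * Vb\<^sup>2 * q"
    and "\<bar>vol_cdf TYPE('a) c0 n n' t - vol_cdf TYPE('a) c0 n n t\<bar> \<le> q"
proof -
  note rf = radius_facts[OF c0 n, folded s_def R_def \<kappa>_def]
  have s2: "s \<ge> 2" by (rule rf(3))
  have R1: "R \<ge> 1" using rf(1) s2 by linarith
  have R0: "R \<ge> 0" using R1 by linarith
  have k0: "\<kappa> \<ge> 0" unfolding \<kappa>_def using c0 by simp
  have s4: "s \<ge> 4 + \<kappa>" using sbig unfolding s_def \<kappa>_def .
  define P where "P = uniform_measure (std_gauss :: 'a measure) (cball 0 R)"
  have Pp: "prob_space P" unfolding P_def by (rule prob_space_psi[OF R1])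
  interpret Pp: prob_space P by (rule Pp)
  have sP: "sets P = sets borel" unfolding P_def by simp
  have spP: "space P = UNIV" unfolding P_def std_gauss_def by simp
  have P0: "measure P (- cball 0 R) = 0"
    unfolding P_def by (subst psi_meas[OF R1]) auto
  define \<eta> where "\<eta> = 1 / s"
  have eta: "0 < \<eta>" "\<eta> \<le> 1" unfolding \<eta>_def using s2 by auto
  obtain N :: "'a set" where N: "finite N" "card N \<le> (2 * nat \<lceil>2 * real DIM('a) / \<eta>\<rceil> + 1) ^ DIM('a)"
      "\<forall>u\<in>N. norm u = 1" "\<forall>v. norm v = 1 \<longrightarrow> (\<exists>u\<in>N. norm (u - v) \<le> \<eta>)"
    using net_exists[OF eta] by blast
  have "card N \<le> (2 * nat \<lceil>2 * real DIM('a) * s\<rceil> + 1) ^ DIM('a)"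
    using N(2) unfolding \<eta>_def by simp
  then have cardN: "real (card N) \<le> Cn"
    unfolding Cn_def by (simp only: of_nat_le_iff)
  define a where "a = s - 3"
  define r where "r = s - 3 - \<kappa>"
  have r0: "r \<ge> 0" unfolding r_def using s4 by simp
  have ar: "r \<le> a - \<eta> * R"
  proof -
    have "\<eta> * R = R / s" unfolding \<eta>_def by simp
    also have "\<dots> \<le> \<kappa>" using rf(2) s2 by (simp add: divide_simps mult.commute)
    finally show ?thesis unfolding r_def a_def by simp
  qed
  have p1: "p \<le> 1"
  proof -
    have e1: "exp (- ((s - 1)\<^sup>2 / 2)) \<le> 1" by simp
    moreover have r1: "1 \<le> R ^ DIM('a)" using R1 by (simp add: one_le_power)
    ultimately have "exp (- ((s - 1)\<^sup>2 / 2)) \<le> R ^ DIM('a)" by linarith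
    then show ?thesis unfolding p_def using r1 by (simp add: divide_le_eq_1)
  qed
  have pfail: "measure P {x. inner x u < a} \<le> 1 - p" if u: "u \<in> N" for u
  proof -
    have nu: "norm u = 1" using N(3) u by blast
    define S where "S = {x::'a. inner x u \<ge> a}"
    have Sb: "S \<in> sets borel" unfolding S_def by measurable
    have cmp: "{x. inner x u < a} = space P - S" unfolding S_def spP by auto
    define c where "c = (s - 2) *\<^sub>R u"
    have nc: "norm c = s - 2" unfolding c_def using nu s2 by simp
    have ball_sub: "ball c 1 \<subseteq> cball 0 R \<inter> S"
    proof
      fix x assume x: "x \<in> ball c 1"
      then have dx: "norm (x - c) < 1" by (simp add: dist_norm norm_minus_commute)
      have "norm x \<le> norm c + norm (x - c)" by (metis add.commute diff_add_cancel norm_triangle_ineq)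
      then have "norm x \<le> R" using nc dx rf(1) by linarith
      moreover have "inner x u \<ge> a"
      proof -
        have "inner x u = inner c u + inner (x - c) u" by (simp add: inner_diff_left)
        moreover have "inner c u = s - 2" unfolding c_def using nu by (simp add: dot_square_norm power2_eq_square[symmetric])
        moreover have "\<bar>inner (x - c) u\<bar> \<le> norm (x - c)" using Cauchy_Schwarz_ineq2[of "x - c" u] nu by simp
        ultimately show ?thesis unfolding a_def using dx nu by linarith
      qed
      ultimately show "x \<in> cball 0 R \<inter> S" unfolding S_def by simp
    qed
    have mb: "norm x \<le> s - 1" if "x \<in> ball c 1" for x
    proof -
      have "norm x \<le> norm c + norm (x - c)" by (metis add.commute diff_add_cancel norm_triangle_ineq)
      moreover have "norm (x - c) < 1" using that by (simp add: dist_norm norm_minus_commute)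
      ultimately show ?thesis using nc by linarith
    qed
    have "p \<le> measure P S"
      unfolding p_def P_def by (rule psi_lower[OF R1 Sb ball_sub mb])
    moreover have "measure P {x. inner x u < a} = 1 - measure P S"
      unfolding cmp by (rule Pp.prob_compl) (simp add: sP Sb)
    ultimately show ?thesis by linarith
  qed
  have ptail: "measure P {x. norm x > r} \<le> \<tau>"
  proof -
    have "measure P {x. norm x > r} \<le> exp (1/2) * R ^ DIM('a) * exp (- (r\<^sup>2 / 2))"
      unfolding P_def by (rule psi_upper[OF R1 _ r0]) auto
    then show ?thesis unfolding \<tau>_def r_def by simp
  qed
  obtain D where D: "D \<in> sets (PiM {..<n'} (\<lambda>_. P))"
      "\<forall>\<omega>\<in>space (PiM {..<n'} (\<lambda>_. P)). hull_vol n' \<omega> \<noteq> hull_vol n \<omega> \<longrightarrow> \<omega> \<in> D"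
      "measure (PiM {..<n'} (\<lambda>_. P)) D \<le> real (card N) * (1 - p) ^ n + real (n' - n) * \<tau>"
    using event_bound(1)[OF Pp sP R0 P0 N(1) _ _ ar pfail ptail nn] N(4) eta by auto
  have AEb: "AE \<omega> in PiM {..<n'} (\<lambda>_. P). \<forall>i<n'. \<omega> i \<in> cball 0 R"
    using event_bound(2)[OF Pp sP R0 P0 N(1) _ _ ar pfail ptail nn] N(4) eta by auto
  have Dq: "measure (PiM {..<n'} (\<lambda>_. P)) D \<le> q"
  proof -
    have "real (card N) * (1 - p) ^ n \<le> Cn * (1 - p) ^ n"
      using cardN p1 by (intro mult_right_mono) auto
    then show ?thesis using D(3) unfolding q_def by linarith
  qed
  note tr = transfer_all[OF Pp sP nn R0 D(1) D(2) Dq AEb, folded Vb_def]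
  have samp: "sample c0 n k = PiM {..<k} (\<lambda>_. P)" for k
    unfolding sample_def Psi'_def P_def R_def ..
  show "\<bar>vol_mean TYPE('a) c0 n n' - vol_mean TYPE('a) c0 n n\<bar> \<le> Vb * q"
    using tr(1) by (simp add: vol_mean_def samp)
  show "\<bar>vol_var TYPE('a) c0 n n' - vol_var TYPE('a) c0 n n\<bar> \<le> 3 * Vb\<^sup>2 * q"
    using tr(2) by (simp add: vol_var_def vol_mean_def samp)
  show "\<bar>vol_cdf TYPE('a) c0 n n' t - vol_cdf TYPE('a) c0 n n t\<bar> \<le> q"
    using tr(3)[of t] by (simp add: vol_cdf_def samp)
qed


lemma exp_ge_term:
  assumes "s \<ge> 0"
  shows "s ^ k / fact k \<le> exp (s::real)"
proof -
  have sm: "summable (\<lambda>n. s ^ n /\<^sub>R fact n)" using exp_converges[of s] by (simp add: sums_iff)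
  have "(\<Sum>n\<in>{k}. s ^ n /\<^sub>R fact n) \<le> (\<Sum>n. s ^ n /\<^sub>R fact n)"
    by (rule sum_le_suminf[OF sm]) (use assms in auto)
  also have "\<dots> = exp s" using exp_converges[of s] by (simp add: sums_iff)
  finally show ?thesis by (simp add: divide_inverse mult.commute)
qed

lemma poly_exp: "eventually (\<lambda>s. C * s ^ m \<le> exp (s::real)) at_top"
proof -
  have "eventually (\<lambda>s. s \<ge> max 1 (\<bar>C\<bar> * fact (Suc m))) at_top" by (rule eventually_ge_at_top)
  then show ?thesis
  proof eventually_elim
    case (elim s)
    then have s1: "s \<ge> 1" and sC: "\<bar>C\<bar> * fact (Suc m) \<le> s" by auto
    have "C * s ^ m \<le> \<bar>C\<bar> * s ^ m" using s1 by (intro mult_right_mono) auto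
    also have "\<dots> = (\<bar>C\<bar> * fact (Suc m)) * s ^ m / fact (Suc m)" by simp
    also have "\<dots> \<le> s * s ^ m / fact (Suc m)"
      using sC s1 by (intro divide_right_mono mult_right_mono) auto
    also have "\<dots> = s ^ Suc m / fact (Suc m)" by simp
    also have "\<dots> \<le> exp s" by (rule exp_ge_term) (use s1 in simp)
    finally show ?case .
  qed
qed

lemma lim_s: "filterlim (\<lambda>n::nat. sqrt (2 * ln (real n))) at_top sequentially"
  by real_asymp

lemma lim_delta: "(\<lambda>n::nat. sqrt (2 * ln (real n)) / ln (real n)) \<longlonglongrightarrow> 0"
  by real_asymp


lemma final_ineq:
  fixes s R \<kappa> A V1 Cn D' :: real and d n :: nat
  assumes s1: "s \<ge> 1" and sR: "s \<le> R" and Rk: "R \<le> \<kappa> * s" and k1: "\<kappa> \<ge> 1"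
    and nr: "real n = exp (s\<^sup>2 / 2)"
    and A: "A \<ge> 0" and V1: "V1 \<ge> 0"
    and Cn: "0 \<le> Cn" "Cn \<le> exp s"
    and D': "0 \<le> D'" "D' \<le> A * sqrt (real n * (s\<^sup>2 / 2))"
    and i: "V1 * (\<kappa> * s) ^ d + 3 * (V1 * (\<kappa> * s) ^ d)\<^sup>2 + 1 \<le> exp s"
    and ii: "A * s * exp (1/2) * (\<kappa> * s) ^ d \<le> exp s"
    and iv: "(\<kappa> * s) ^ d * (s\<^sup>2 / 4 + 2 * s) \<le> exp (s - 1/2)"
  defines "p \<equiv> exp (- ((s - 1)\<^sup>2 / 2)) / R ^ d"
    and "\<tau> \<equiv> exp (1/2) * R ^ d * exp (- ((s - 3 - \<kappa>)\<^sup>2 / 2))"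
  defines "q \<equiv> Cn * (1 - p) ^ n + D' * \<tau>" and "Vb \<equiv> V1 * R ^ d"
  shows "Vb * q \<le> exp (- (s\<^sup>2 / 4) + (6 + \<kappa>) * s)" "3 * Vb\<^sup>2 * q \<le> exp (- (s\<^sup>2 / 4) + (6 + \<kappa>) * s)"
    "q \<le> exp (- (s\<^sup>2 / 4) + (6 + \<kappa>) * s)"
proof -
  define c where "c = 3 + \<kappa>"
  have R1: "R \<ge> 1" using s1 sR by linarith
  have Rd1: "R ^ d \<ge> 1" using R1 by (simp add: one_le_power)
  have ks0: "\<kappa> * s > 0" using k1 s1 by simp
  have Rdk: "R ^ d \<le> (\<kappa> * s) ^ d" using Rk R1 by (intro power_mono) auto
  have p0: "p \<ge> 0" unfolding p_def using R1 by simp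
  have p1: "p \<le> 1"
  proof -
    have "exp (- ((s - 1)\<^sup>2 / 2)) \<le> 1" by simp
    then have "exp (- ((s - 1)\<^sup>2 / 2)) \<le> R ^ d" using Rd1 by linarith
    then show ?thesis unfolding p_def using Rd1 by (simp add: divide_le_eq_1)
  qed
  have pow: "(1 - p) ^ n \<le> exp (- (p * real n))"
  proof -
    have "1 - p \<le> exp (- p)" using exp_ge_add_one_self[of "-p"] by simp
    then have "(1 - p) ^ n \<le> exp (- p) ^ n" using p1 by (intro power_mono) auto
    also have "\<dots> = exp (- (p * real n))" by (simp add: exp_of_nat_mult[symmetric] mult.commute)
    finally show ?thesis .
  qed
  have pn: "p * real n \<ge> s\<^sup>2 / 4 + 2 * s"
  proof -
    have "p * real n = exp (- ((s - 1)\<^sup>2 / 2) + s\<^sup>2 / 2) / R ^ d"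
      unfolding p_def nr by (simp add: exp_add[symmetric] mult.commute)
    also have "- ((s - 1)\<^sup>2 / 2) + s\<^sup>2 / 2 = s - 1/2" by (simp add: power2_eq_square field_simps)
    finally have 1: "p * real n = exp (s - 1/2) / R ^ d" .
    have "exp (s - 1/2) / (\<kappa> * s) ^ d \<le> exp (s - 1/2) / R ^ d"
      using Rdk Rd1 by (intro divide_left_mono) auto
    moreover have "s\<^sup>2 / 4 + 2 * s \<le> exp (s - 1/2) / (\<kappa> * s) ^ d"
      using iv ks0 by (simp add: pos_le_divide_eq mult.commute)
    ultimately show ?thesis using 1 by linarith
  qed
  have T1: "Cn * (1 - p) ^ n \<le> exp (- (s\<^sup>2 / 4) + c * s)"
  proof -
    have "(1 - p) ^ n \<le> exp (- (s\<^sup>2 / 4 + 2 * s))"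
      using pow pn by (meson exp_le_cancel_iff neg_le_iff_le order_trans)
    then have "Cn * (1 - p) ^ n \<le> exp s * exp (- (s\<^sup>2 / 4 + 2 * s))"
      using Cn p1 by (intro mult_mono) auto
    also have "\<dots> = exp (- (s\<^sup>2 / 4) - s)" by (simp add: exp_add[symmetric] algebra_simps)
    also have "\<dots> \<le> exp (- (s\<^sup>2 / 4) + c * s)"
    proof -
      have "c * s \<ge> 0" unfolding c_def using k1 s1 by simp
      then show ?thesis using s1 by simp
    qed
    finally show ?thesis .
  qed
  have sqn: "sqrt (real n * (s\<^sup>2 / 2)) \<le> exp (s\<^sup>2 / 4) * s"
  proof -
    have "sqrt (real n * (s\<^sup>2 / 2)) \<le> sqrt (real n * s\<^sup>2)" by (intro real_sqrt_le_mono mult_left_mono) auto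
    also have "real n * s\<^sup>2 = (exp (s\<^sup>2 / 4) * s)\<^sup>2"
      unfolding nr by (simp add: power_mult_distrib exp_double[symmetric] power2_eq_square[of "exp _"] exp_add[symmetric])
    also have "sqrt \<dots> = exp (s\<^sup>2 / 4) * s" using s1 by simp
    finally show ?thesis .
  qed
  have tau: "\<tau> \<le> exp (1/2) * (\<kappa> * s) ^ d * exp (- (s\<^sup>2 / 2) + c * s)"
  proof -
    have e: "(s - 3 - \<kappa>)\<^sup>2 = s\<^sup>2 - 2 * c * s + c\<^sup>2"
      unfolding c_def by (simp add: power2_eq_square algebra_simps)
    have "- ((s - 3 - \<kappa>)\<^sup>2 / 2) \<le> - (s\<^sup>2 / 2) + c * s"
      unfolding e using zero_le_power2[of c] by (simp add: field_simps)
    then have "exp (- ((s - 3 - \<kappa>)\<^sup>2 / 2)) \<le> exp (- (s\<^sup>2 / 2) + c * s)" by simp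
    then show ?thesis unfolding \<tau>_def using Rdk Rd1 by (intro mult_mono) auto
  qed
  have T2: "D' * \<tau> \<le> exp s * exp (- (s\<^sup>2 / 4) + c * s)"
  proof -
    have "D' * \<tau> \<le> (A * (exp (s\<^sup>2 / 4) * s)) * (exp (1/2) * (\<kappa> * s) ^ d * exp (- (s\<^sup>2 / 2) + c * s))"
    proof (rule mult_mono[OF _ tau])
      show "D' \<le> A * (exp (s\<^sup>2 / 4) * s)"
        using D'(2) mult_left_mono[OF sqn A] by linarith
      show "0 \<le> A * (exp (s\<^sup>2 / 4) * s)" using A s1 by simp
      show "0 \<le> \<tau>" unfolding \<tau>_def using R1 by simp
    qed
    also have "\<dots> = (A * s * exp (1/2) * (\<kappa> * s) ^ d) * (exp (s\<^sup>2 / 4) * exp (- (s\<^sup>2 / 2) + c * s))"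
      by (simp add: algebra_simps)
    also have "exp (s\<^sup>2 / 4) * exp (- (s\<^sup>2 / 2) + c * s) = exp (- (s\<^sup>2 / 4) + c * s)"
      by (simp add: exp_add[symmetric])
    also have "(A * s * exp (1/2) * (\<kappa> * s) ^ d) * exp (- (s\<^sup>2 / 4) + c * s) \<le> exp s * exp (- (s\<^sup>2 / 4) + c * s)"
      using ii by (intro mult_right_mono) auto
    finally show ?thesis .
  qed
  have es1: "exp s \<ge> 1" using s1 by simp
  have es2: "exp s \<ge> 2"
  proof -
    have "exp (1::real) \<ge> 2" using exp_ge_add_one_self[of 1] by simp
    then show ?thesis using s1 by (meson exp_le_cancel_iff order_trans)
  qed
  have Eq: "exp (- (s\<^sup>2 / 4) + c * s) > 0" by simp
  have q_le: "q \<le> 2 * exp s * exp (- (s\<^sup>2 / 4) + c * s)"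
  proof -
    have "exp (- (s\<^sup>2 / 4) + c * s) \<le> exp s * exp (- (s\<^sup>2 / 4) + c * s)"
      using es1 Eq by simp
    moreover have "2 * exp s * exp (- (s\<^sup>2 / 4) + c * s) = exp s * exp (- (s\<^sup>2 / 4) + c * s) + exp s * exp (- (s\<^sup>2 / 4) + c * s)"
      by simp
    ultimately show ?thesis unfolding q_def using T1 T2 by linarith
  qed
  have q0: "q \<ge> 0"
  proof -
    have "\<tau> \<ge> 0" unfolding \<tau>_def using R1 by simp
    then show ?thesis unfolding q_def using Cn D' p1 by (intro add_nonneg_nonneg mult_nonneg_nonneg) auto
  qed
  have Vb0: "Vb \<ge> 0" unfolding Vb_def using V1 R1 by simp
  have Vbk: "Vb \<le> V1 * (\<kappa> * s) ^ d" unfolding Vb_def using Rdk V1 by (intro mult_left_mono) auto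
  have W: "Vb + 3 * Vb\<^sup>2 + 1 \<le> exp s"
  proof -
    have "Vb\<^sup>2 \<le> (V1 * (\<kappa> * s) ^ d)\<^sup>2" using Vb0 Vbk by (intro power_mono) auto
    then show ?thesis using Vbk i by linarith
  qed
  have final: "X * q \<le> exp (- (s\<^sup>2 / 4) + (6 + \<kappa>) * s)" if X: "0 \<le> X" "X \<le> Vb + 3 * Vb\<^sup>2 + 1" for X
  proof -
    have "X * q \<le> exp s * (2 * exp s * exp (- (s\<^sup>2 / 4) + c * s))"
      using X W q_le q0 by (intro mult_mono) auto
    also have "\<dots> \<le> exp s * (exp s * exp s * exp (- (s\<^sup>2 / 4) + c * s))"
      using es2 Eq by (intro mult_left_mono mult_right_mono) auto
    also have "\<dots> = exp (- (s\<^sup>2 / 4) + (6 + \<kappa>) * s)"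
      unfolding c_def by (simp add: exp_add[symmetric] algebra_simps)
    finally show ?thesis .
  qed
  show "Vb * q \<le> exp (- (s\<^sup>2 / 4) + (6 + \<kappa>) * s)"
    using final[of Vb] Vb0 by simp
  show "3 * Vb\<^sup>2 * q \<le> exp (- (s\<^sup>2 / 4) + (6 + \<kappa>) * s)"
    using final[of "3 * Vb\<^sup>2"] Vb0 by simp
  show "q \<le> exp (- (s\<^sup>2 / 4) + (6 + \<kappa>) * s)"
    using final[of 1] Vb0 by simp
qed


lemma ev_s:
  fixes \<kappa> A V1 :: real and d :: nat
  assumes k: "\<kappa> \<ge> 1" and A: "A \<ge> 0" and V1: "V1 \<ge> 0" and d: "d \<ge> 1"
  shows "eventually (\<lambda>s. s \<ge> 1 \<and> (4 * real d * s + 3) ^ d \<le> exp s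
     \<and> V1 * (\<kappa> * s) ^ d + 3 * (V1 * (\<kappa> * s) ^ d)\<^sup>2 + 1 \<le> exp s
     \<and> A * s * exp (1/2) * (\<kappa> * s) ^ d \<le> exp s
     \<and> (\<kappa> * s) ^ d * (s\<^sup>2 / 4 + 2 * s) \<le> exp (s - 1/2)) at_top"
proof -
  have e1: "eventually (\<lambda>s::real. s \<ge> 1) at_top" by (rule eventually_ge_at_top)
  note e2 = poly_exp[of "(7 * real d) ^ d" d]
  note e3 = poly_exp[of "V1 * \<kappa> ^ d + 3 * V1\<^sup>2 * \<kappa> ^ (2 * d) + 1" "2 * d"]
  note e4 = poly_exp[of "A * exp (1/2) * \<kappa> ^ d" "Suc d"]
  note e5 = poly_exp[of "3 * \<kappa> ^ d * exp (1/2)" "d + 2"]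
  show ?thesis using e1 e2 e3 e4 e5
  proof eventually_elim
    case (elim s)
    have s1: "s \<ge> 1" using elim by simp
    have s0: "s \<ge> 0" using s1 by simp
    have sd: "s ^ d \<le> s ^ (2 * d)" using s1 by (intro power_increasing) auto
    have sd1: "1 \<le> s ^ (2 * d)" using s1 by (simp add: one_le_power)
    have c1: "(4 * real d * s + 3) ^ d \<le> exp s"
    proof -
      have "1 * 1 \<le> real d * s" using d s1 by (intro mult_mono) auto
      then have "4 * real d * s + 3 \<le> 7 * real d * s" by (simp add: mult.commute)
      then have "(4 * real d * s + 3) ^ d \<le> (7 * real d * s) ^ d" using s0 by (intro power_mono) auto
      also have "\<dots> = (7 * real d) ^ d * s ^ d" by (simp add: power_mult_distrib)
      finally show ?thesis using elim by linarith
    qed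
    have c2: "V1 * (\<kappa> * s) ^ d + 3 * (V1 * (\<kappa> * s) ^ d)\<^sup>2 + 1 \<le> exp s"
    proof -
      have "V1 * (\<kappa> * s) ^ d = V1 * \<kappa> ^ d * s ^ d" by (simp add: power_mult_distrib)
      also have "\<dots> \<le> V1 * \<kappa> ^ d * s ^ (2 * d)" using sd V1 k by (intro mult_left_mono) auto
      finally have a: "V1 * (\<kappa> * s) ^ d \<le> V1 * \<kappa> ^ d * s ^ (2 * d)" .
      have b: "(V1 * (\<kappa> * s) ^ d)\<^sup>2 = V1\<^sup>2 * \<kappa> ^ (2 * d) * s ^ (2 * d)"
        by (simp add: power_mult_distrib power_mult[symmetric] mult.commute)
      have "V1 * (\<kappa> * s) ^ d + 3 * (V1 * (\<kappa> * s) ^ d)\<^sup>2 + 1 \<le> (V1 * \<kappa> ^ d + 3 * V1\<^sup>2 * \<kappa> ^ (2 * d) + 1) * s ^ (2 * d)"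
      proof -
        have rhs: "(V1 * \<kappa> ^ d + 3 * V1\<^sup>2 * \<kappa> ^ (2 * d) + 1) * s ^ (2 * d) = V1 * \<kappa> ^ d * s ^ (2 * d) + 3 * (V1\<^sup>2 * \<kappa> ^ (2 * d) * s ^ (2 * d)) + s ^ (2 * d)"
          by (simp add: algebra_simps)
        show ?thesis unfolding rhs b using a sd1 by linarith
      qed
      then show ?thesis using elim by linarith
    qed
    have c3: "A * s * exp (1/2) * (\<kappa> * s) ^ d \<le> exp s"
    proof -
      have "A * s * exp (1/2) * (\<kappa> * s) ^ d = A * exp (1/2) * \<kappa> ^ d * s ^ Suc d"
        by (simp add: power_mult_distrib algebra_simps)
      then show ?thesis using elim by linarith
    qed
    have c4: "(\<kappa> * s) ^ d * (s\<^sup>2 / 4 + 2 * s) \<le> exp (s - 1/2)"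
    proof -
      have "s \<le> s\<^sup>2" using s1 by (simp add: power2_eq_square)
      then have "s\<^sup>2 / 4 + 2 * s \<le> 3 * s\<^sup>2" using zero_le_power2[of s] by linarith
      then have "(\<kappa> * s) ^ d * (s\<^sup>2 / 4 + 2 * s) \<le> (\<kappa> * s) ^ d * (3 * s\<^sup>2)"
        using k s0 by (intro mult_left_mono) auto
      also have "\<dots> = 3 * \<kappa> ^ d * s ^ (d + 2)" by (simp add: power_mult_distrib power_add algebra_simps power2_eq_square)
      also have "\<dots> = (3 * \<kappa> ^ d * exp (1/2) * s ^ (d + 2)) / exp (1/2)" by simp
      also have "\<dots> \<le> exp s / exp (1/2)" using elim by (intro divide_right_mono) auto
      also have "\<dots> = exp (s - 1/2)" by (simp add: exp_diff)
      finally show ?thesis .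
    qed
    show ?case using s1 c1 c2 c3 c4 by blast
  qed
qed


lemma Cn_le:
  fixes s :: real and d :: nat
  assumes "s \<ge> 0"
  shows "real ((2 * nat \<lceil>2 * real d * s\<rceil> + 1) ^ d) \<le> (4 * real d * s + 3) ^ d"
proof -
  have x0: "2 * real d * s \<ge> 0" using assms by simp
  have "real (nat \<lceil>2 * real d * s\<rceil>) = real_of_int \<lceil>2 * real d * s\<rceil>" using x0 by simp
  also have "\<dots> \<le> 2 * real d * s + 1" using ceiling_correct[of "2 * real d * s"] by linarith
  finally have "real (2 * nat \<lceil>2 * real d * s\<rceil> + 1) \<le> 4 * real d * s + 3" by simp
  then have "real (2 * nat \<lceil>2 * real d * s\<rceil> + 1) ^ d \<le> (4 * real d * s + 3) ^ d"
    by (intro power_mono) auto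
  then show ?thesis by simp
qed

theorem lemma8p4:
  assumes "DIM('a::euclidean_space) \<ge> 2"
  shows "\<exists>C0::real. \<forall>c0\<ge>C0. \<forall>A::real\<ge>10. \<exists>\<delta>::nat \<Rightarrow> real. \<delta> \<longlonglongrightarrow> 0 \<and>
    (\<forall>\<^sub>F n in sequentially. \<forall>n'::nat. n \<le> n' \<and> real n' \<le> real n + A * sqrt (real n * ln (real n)) \<longrightarrow>
       \<bar>vol_mean TYPE('a) c0 n n' - vol_mean TYPE('a) c0 n n\<bar> \<le> real n powr (-1/2 + \<delta> n) \<and>
       \<bar>vol_var TYPE('a) c0 n n' - vol_var TYPE('a) c0 n n\<bar> \<le> real n powr (-1/2 + \<delta> n) \<and>
       (\<forall>t. \<bar>vol_cdf TYPE('a) c0 n n' t - vol_cdf TYPE('a) c0 n n t\<bar> \<le> real n powr (-1/2 + \<delta> n)))"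
proof (intro exI[of _ 0] allI impI)
  fix c0 A :: real
  assume c0: "c0 \<ge> 0" and A10: "A \<ge> 10"
  have A: "A \<ge> 0" using A10 by simp
  define \<kappa> where "\<kappa> = sqrt (1 + c0 / 2)"
  have k1: "\<kappa> \<ge> 1" unfolding \<kappa>_def using c0 by simp
  define d where "d = DIM('a)"
  have d1: "d \<ge> 1" unfolding d_def using DIM_positive[where 'a='a] by linarith
  define V1 where "V1 = unit_ball_vol (real DIM('a))"
  have V1: "V1 \<ge> 0" unfolding V1_def by simp
  define K where "K = 6 + \<kappa>"
  define \<delta> where "\<delta> = (\<lambda>n::nat. K * (sqrt (2 * ln (real n)) / ln (real n)))"
  have lim: "\<delta> \<longlonglongrightarrow> 0" unfolding \<delta>_def by (rule tendsto_mult_right_zero[OF lim_delta])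
  define Ps where "Ps = (\<lambda>s::real. s \<ge> 1 \<and> (4 * real d * s + 3) ^ d \<le> exp s
     \<and> V1 * (\<kappa> * s) ^ d + 3 * (V1 * (\<kappa> * s) ^ d)\<^sup>2 + 1 \<le> exp s
     \<and> A * s * exp (1/2) * (\<kappa> * s) ^ d \<le> exp s
     \<and> (\<kappa> * s) ^ d * (s\<^sup>2 / 4 + 2 * s) \<le> exp (s - 1/2) \<and> s \<ge> 4 + \<kappa>)"
  have evs: "eventually Ps at_top"
    unfolding Ps_def using ev_s[OF k1 A V1 d1] eventually_ge_at_top[of "4 + \<kappa>"]
    by eventually_elim auto
  have evn: "eventually (\<lambda>n. Ps (sqrt (2 * ln (real n))) \<and> n \<ge> 16) sequentially"
    using eventually_compose_filterlim[OF evs lim_s] eventually_ge_at_top[of "16::nat"]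
    by eventually_elim auto
  show "\<exists>\<delta>::nat \<Rightarrow> real. \<delta> \<longlonglongrightarrow> 0 \<and>
    (\<forall>\<^sub>F n in sequentially. \<forall>n'::nat. n \<le> n' \<and> real n' \<le> real n + A * sqrt (real n * ln (real n)) \<longrightarrow>
       \<bar>vol_mean TYPE('a) c0 n n' - vol_mean TYPE('a) c0 n n\<bar> \<le> real n powr (-1/2 + \<delta> n) \<and>
       \<bar>vol_var TYPE('a) c0 n n' - vol_var TYPE('a) c0 n n\<bar> \<le> real n powr (-1/2 + \<delta> n) \<and>
       (\<forall>t. \<bar>vol_cdf TYPE('a) c0 n n' t - vol_cdf TYPE('a) c0 n n t\<bar> \<le> real n powr (-1/2 + \<delta> n)))"
  proof (intro exI[of _ \<delta>] conjI lim)
    show "\<forall>\<^sub>F n in sequentially. \<forall>n'::nat. n \<le> n' \<and> real n' \<le> real n + A * sqrt (real n * ln (real n)) \<longrightarrow>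
       \<bar>vol_mean TYPE('a) c0 n n' - vol_mean TYPE('a) c0 n n\<bar> \<le> real n powr (-1/2 + \<delta> n) \<and>
       \<bar>vol_var TYPE('a) c0 n n' - vol_var TYPE('a) c0 n n\<bar> \<le> real n powr (-1/2 + \<delta> n) \<and>
       (\<forall>t. \<bar>vol_cdf TYPE('a) c0 n n' t - vol_cdf TYPE('a) c0 n n t\<bar> \<le> real n powr (-1/2 + \<delta> n))"
      using evn
    proof eventually_elim
      case (elim n)
      define s where "s = sqrt (2 * ln (real n))"
      have Ps: "Ps s" and n16: "n \<ge> 16" using elim unfolding s_def by auto
      have s1: "s \<ge> 1" and s4: "s \<ge> 4 + \<kappa>" using Ps unfolding Ps_def by auto
      have lnpos: "ln (real n) > 0" using n16 by simp
      have s2: "s\<^sup>2 = 2 * ln (real n)" unfolding s_def using lnpos by simp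
      have nexp: "real n = exp (s\<^sup>2 / 2)" using s2 n16 by simp
      define R where "R = radius c0 n"
      note rf = radius_facts[OF c0 n16, folded s_def R_def \<kappa>_def]
      have powr_eq: "real n powr (-1/2 + \<delta> n) = exp (- (s\<^sup>2 / 4) + K * s)"
      proof -
        have "real n powr (-1/2 + \<delta> n) = exp ((-1/2 + \<delta> n) * ln (real n))"
          using n16 by (simp add: powr_def)
        also have "(-1/2 + \<delta> n) * ln (real n) = - (s\<^sup>2 / 4) + K * s"
          unfolding \<delta>_def s2 using lnpos by (simp add: field_simps s_def[symmetric])
        finally show ?thesis .
      qed
      show ?case
      proof (intro allI impI)
        fix n' assume nn': "n \<le> n' \<and> real n' \<le> real n + A * sqrt (real n * ln (real n))"
        then have nn: "n \<le> n'" by simp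
        define D' where "D' = real (n' - n)"
        have D': "0 \<le> D'" "D' \<le> A * sqrt (real n * (s\<^sup>2 / 2))"
          unfolding D'_def using nn' s2 by (auto simp: of_nat_diff)
        define Cn where "Cn = real ((2 * nat \<lceil>2 * real d * s\<rceil> + 1) ^ d)"
        have Cn0: "0 \<le> Cn" unfolding Cn_def by (rule of_nat_0_le_iff)
        have "Cn \<le> (4 * real d * s + 3) ^ d" unfolding Cn_def using Cn_le[of s d] s1 by simp
        then have Cn: "0 \<le> Cn" "Cn \<le> exp s" using Cn0 Ps unfolding Ps_def by auto
        note pb = psi_bound[OF c0 n16 s4[unfolded s_def \<kappa>_def] nn, where 'a='a,
            folded s_def \<kappa>_def R_def d_def V1_def Cn_def D'_def]
        note fi = final_ineq[OF s1 rf(1) rf(2) k1 nexp A V1 Cn D', of d]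
        have ii: "V1 * (\<kappa> * s) ^ d + 3 * (V1 * (\<kappa> * s) ^ d)\<^sup>2 + 1 \<le> exp s"
          "A * s * exp (1/2) * (\<kappa> * s) ^ d \<le> exp s"
          "(\<kappa> * s) ^ d * (s\<^sup>2 / 4 + 2 * s) \<le> exp (s - 1/2)" using Ps unfolding Ps_def by auto
        note fi' = fi[OF ii, folded K_def]
        show "\<bar>vol_mean TYPE('a) c0 n n' - vol_mean TYPE('a) c0 n n\<bar> \<le> real n powr (-1/2 + \<delta> n) \<and>
          \<bar>vol_var TYPE('a) c0 n n' - vol_var TYPE('a) c0 n n\<bar> \<le> real n powr (-1/2 + \<delta> n) \<and>
          (\<forall>t. \<bar>vol_cdf TYPE('a) c0 n n' t - vol_cdf TYPE('a) c0 n n t\<bar> \<le> real n powr (-1/2 + \<delta> n))"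
          unfolding powr_eq using pb fi'[unfolded Cn_def] by (meson order_trans)
      qed
    qed
  qed
qed


end
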